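(* Let $H=\bigcup_{j=1}^n(c_j,d_j)\subset\mathbb R$ with pairwise disjoint closed intervals $[c_j,d_j]$, let $\mathcal B$ be finite and $m\ge2$. Assume for each $\beta\in\mathcal B$: $b_\beta,\theta_\beta\in C^m(\bar H)$, $b_\beta>0$ on $\bar H$, $\theta_\beta(H)\subset H$; and there exist $\mu\ge1$ and $\kappa<1$ with $|\theta_\omega(x)-\theta_\omega(y)|\le\kappa|x-y|$ for all $\omega\in\mathcal B_\mu$, $x,y\in\bar H$. Let $C_1=\sup\{|Db_\beta(x)|/b_\beta(x):\beta\in\mathcal B,x\in H\}$, $C_2=\sup\{|D^2b_\beta(x)|/b_\beta(x):\beta\in\mathcal B,x\in H\}$, $M_0=\sup\{|D^2\theta_\beta(x)|:\beta\in\mathcal B,x\in\bar H\}$, $\epsilon_0=1$ and $\epsilon_\nu=\sup\{|\theta_\omega(x)-\theta_\omega(y)|/|x-y|:\omega\in\mathcal B_\nu,x,y\in H,x\neq y\}$ for $\nu\ge1$. Then for $s>0$, every $\nu\ge1$, every $\omega\in\mathcal B_\nu$ and $x\in\bar H$, $$\frac{D^2(b_\omega(x)^s)}{b_\omega(x)^s}\le s^2C_1^2\Big(\sum_{k=0}^\infty\epsilon_k\Big)^2+s\Big(\sum_{k=0}^\infty\epsilon_k^2\Big)\Big[C_2+C_1M_0\sum_{k=0}^\infty\epsilon_k\Big]$$ and $$\frac{D^2(b_\omega(x)^s)}{b_\omega(x)^s}\ge -s\Big(\sum_{k=0}^\infty\epsilon_k^2\Big)\Big[C_1^2+C_2+C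_1M_0\sum_{k=0}^\infty\epsilon_k\Big].$$
   Context: $D=d/dx$. $\mathcal B_\nu=\{(j_1,\ldots,j_\nu):j_k\in\mathcal B\}$; for $\omega=(j_1,\ldots,j_\nu)$, $\theta_\omega=\theta_{j_\nu}\circ\cdots\circ\theta_{j_1}$ and $b_\omega(x)=b_{j_\nu}(\theta_{(j_1,\ldots,j_{\nu-1})}(x))\cdots b_{j_2}(\theta_{j_1}(x))\,b_{j_1}(x)$. $C^m(\bar H)$ denotes real $C^m$ functions on $H$ whose derivatives of order $\le m$ extend continuously to $\bar H$. *)

theory Defs
  imports "HOL-Analysis.Analysis"
begin

definition union_intervals :: "nat \<Rightarrow> (nat \<Rightarrow> real) \<Rightarrow> (nat \<Rightarrow> real) \<Rightarrow> real set" where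
  "union_intervals n c d = (\<Union>j\<in>{1..n}. {c j<..<d j})"

text \<open>C^m(closure H): f is C^m on the open set H and all derivatives of order at most m
  extend continuously to closure H. g k is the (extended) k-th derivative, g 0 = f.\<close>
definition Cm_bar :: "nat \<Rightarrow> real set \<Rightarrow> (real \<Rightarrow> real) \<Rightarrow> bool" where
  "Cm_bar m H f \<longleftrightarrow>
     (\<exists>g :: nat \<Rightarrow> real \<Rightarrow> real. g 0 = f \<and>
        (\<forall>k<m. \<forall>x\<in>H. (g k has_real_derivative g (Suc k) x) (at x)) \<and>
        (\<forall>k\<le>m. continuous_on (closure H) (g k)))"

text \<open>Words of length nu over B; a word [j1,...,jnu] is applied j1 first.\<close>
definition words :: "'b set \<Rightarrow> nat \<Rightarrow> 'b list set" where
  "words B nu = {w. length w = nu \<and> set w \<subseteq> B}"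

primrec theta_comp :: "('b \<Rightarrow> real \<Rightarrow> real) \<Rightarrow> 'b list \<Rightarrow> real \<Rightarrow> real" where
  "theta_comp \<theta> [] = id"
| "theta_comp \<theta> (j # js) = theta_comp \<theta> js \<circ> \<theta> j"

primrec b_comp :: "('b \<Rightarrow> real \<Rightarrow> real) \<Rightarrow> ('b \<Rightarrow> real \<Rightarrow> real) \<Rightarrow> 'b list \<Rightarrow> real \<Rightarrow> real" where
  "b_comp b \<theta> [] x = 1"
| "b_comp b \<theta> (j # js) x = b_comp b \<theta> js (\<theta> j x) * b j x"

definition const_C1 :: "'b set \<Rightarrow> ('b \<Rightarrow> real \<Rightarrow> real) \<Rightarrow> real set \<Rightarrow> real" where
  "const_C1 B b H = Sup {\<bar>deriv (b \<beta>) x\<bar> / b \<beta> x | \<beta> x. \<beta> \<in> B \<and> x \<in> H}"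

definition const_C2 :: "'b set \<Rightarrow> ('b \<Rightarrow> real \<Rightarrow> real) \<Rightarrow> real set \<Rightarrow> real" where
  "const_C2 B b H = Sup {\<bar>deriv (deriv (b \<beta>)) x\<bar> / b \<beta> x | \<beta> x. \<beta> \<in> B \<and> x \<in> H}"

text \<open>M0: sup of |D^2 theta_beta| over closure H; the continuous extension of D^2 theta_beta
  to closure H has the same supremum as D^2 theta_beta on H, so we take the sup over H.\<close>
definition const_M0 :: "'b set \<Rightarrow> ('b \<Rightarrow> real \<Rightarrow> real) \<Rightarrow> real set \<Rightarrow> real" where
  "const_M0 B \<theta> H = Sup {\<bar>deriv (deriv (\<theta> \<beta>)) x\<bar> | \<beta> x. \<beta> \<in> B \<and> x \<in> H}"

definition eps :: "'b set \<Rightarrow> ('b \<Rightarrow> real \<Rightarrow> real) \<Rightarrow> real set \<Rightarrow> nat \<Rightarrow> real" where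
  "eps B \<theta> H nu = (if nu = 0 then 1 else
     Sup {\<bar>theta_comp \<theta> w x - theta_comp \<theta> w y\<bar> / \<bar>x - y\<bar> | w x y.
            w \<in> words B nu \<and> x \<in> H \<and> y \<in> H \<and> x \<noteq> y})"

end

theory Submission
  imports Defs
begin


primrec T1 :: "('b \<Rightarrow> real \<Rightarrow> real) \<Rightarrow> ('b \<Rightarrow> real \<Rightarrow> real) \<Rightarrow> 'b list \<Rightarrow> real \<Rightarrow> real" where
  "T1 t t1 [] x = 1"
| "T1 t t1 (j # js) x = T1 t t1 js (t j x) * t1 j x"

primrec T2 :: "('b \<Rightarrow> real \<Rightarrow> real) \<Rightarrow> ('b \<Rightarrow> real \<Rightarrow> real) \<Rightarrow> ('b \<Rightarrow> real \<Rightarrow> real) \<Rightarrow> 'b list \<Rightarrow> real \<Rightarrow> real" where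
  "T2 t t1 t2 [] x = 0"
| "T2 t t1 t2 (j # js) x = T2 t t1 t2 js (t j x) * (t1 j x)\<^sup>2 + T1 t t1 js (t j x) * t2 j x"

lemma theta_comp_maps:
  assumes "\<forall>\<beta>\<in>B. \<forall>x\<in>H. t \<beta> x \<in> H" "set w \<subseteq> B" "x \<in> H"
  shows "theta_comp t w x \<in> H"
  using assms(2,3) by (induction w arbitrary: x) (auto simp: assms(1))

lemma theta_comp_deriv:
  assumes maps: "\<forall>\<beta>\<in>B. \<forall>x\<in>H. t \<beta> x \<in> H"
    and d0: "\<forall>\<beta>\<in>B. \<forall>x\<in>H. (t \<beta> has_real_derivative t1 \<beta> x) (at x)"
    and d1: "\<forall>\<beta>\<in>B. \<forall>x\<in>H. (t1 \<beta> has_real_derivative t2 \<beta> x) (at x)"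
    and "set w \<subseteq> B" "x \<in> H"
  shows "(theta_comp t w has_real_derivative T1 t t1 w x) (at x) \<and>
         (T1 t t1 w has_real_derivative T2 t t1 t2 w x) (at x)"
  using assms(4,5)
proof (induction w arbitrary: x)
  case Nil
  then show ?case by (auto intro!: derivative_eq_intros)
next
  case (Cons j js)
  have j: "j \<in> B" and js: "set js \<subseteq> B" using Cons.prems by auto
  have tx: "t j x \<in> H" using maps j Cons.prems by auto
  from Cons.IH[OF js tx] have IH1: "(theta_comp t js has_real_derivative T1 t t1 js (t j x)) (at (t j x))"
    and IH2: "(T1 t t1 js has_real_derivative T2 t t1 t2 js (t j x)) (at (t j x))" by auto
  have dt: "(t j has_real_derivative t1 j x) (at x)" using d0 j Cons.prems by auto
  have dt1: "(t1 j has_real_derivative t2 j x) (at x)" using d1 j Cons.prems by auto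
  have A: "(theta_comp t (j # js) has_real_derivative T1 t t1 (j # js) x) (at x)"
    using DERIV_chain[OF IH1 dt] by (simp add: mult.commute)
  have B1: "((\<lambda>y. T1 t t1 js (t j y)) has_real_derivative T2 t t1 t2 js (t j x) * t1 j x) (at x)"
    using DERIV_chain2[OF IH2 dt] .
  have B: "((\<lambda>y. T1 t t1 js (t j y) * t1 j y) has_real_derivative
      T2 t t1 t2 js (t j x) * t1 j x * t1 j x + T1 t t1 js (t j x) * t2 j x) (at x)"
    using DERIV_mult[OF B1 dt1] by (simp add: ac_simps)
  have e: "T1 t t1 (j # js) = (\<lambda>y. T1 t t1 js (t j y) * t1 j y)" by (rule ext) simp
  have "(T1 t t1 (j # js) has_real_derivative T2 t t1 t2 (j # js) x) (at x)"
    unfolding e using B by (simp add: power2_eq_square mult.assoc)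
  with A show ?case by (rule conjI)
qed

lemma b_comp_prod:
  "b_comp b t w x = (\<Prod>k<length w. b (w!k) (theta_comp t (take k w) x))"
proof (induction w arbitrary: x)
  case Nil
  then show ?case by simp
next
  case (Cons j js)
  show ?case
    unfolding length_Cons prod.lessThan_Suc_shift by (simp add: Cons mult.commute)
qed



lemma term_deriv:
  assumes maps: "\<forall>\<beta>\<in>B. \<forall>x\<in>H. t \<beta> x \<in> H"
    and d0: "\<forall>\<beta>\<in>B. \<forall>x\<in>H. (t \<beta> has_real_derivative t1 \<beta> x) (at x)"
    and d1: "\<forall>\<beta>\<in>B. \<forall>x\<in>H. (t1 \<beta> has_real_derivative t2 \<beta> x) (at x)"
    and e0: "\<forall>\<beta>\<in>B. \<forall>x\<in>H. (b \<beta> has_real_derivative b1 \<beta> x) (at x)"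
    and e1: "\<forall>\<beta>\<in>B. \<forall>x\<in>H. (b1 \<beta> has_real_derivative b2 \<beta> x) (at x)"
    and bpos: "\<forall>\<beta>\<in>B. \<forall>x\<in>H. b \<beta> x > 0"
    and p: "set p \<subseteq> B" and be: "\<beta> \<in> B" and x: "x \<in> H"
  shows "((\<lambda>y. ln (b \<beta> (theta_comp t p y))) has_real_derivative
           b1 \<beta> (theta_comp t p x) / b \<beta> (theta_comp t p x) * T1 t t1 p x) (at x)
       \<and> ((\<lambda>y. b1 \<beta> (theta_comp t p y) / b \<beta> (theta_comp t p y) * T1 t t1 p y) has_real_derivative
           (b2 \<beta> (theta_comp t p x) / b \<beta> (theta_comp t p x)
              - (b1 \<beta> (theta_comp t p x) / b \<beta> (theta_comp t p x))\<^sup>2) * (T1 t t1 p x)\<^sup>2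
           + b1 \<beta> (theta_comp t p x) / b \<beta> (theta_comp t p x) * T2 t t1 t2 p x) (at x)"
proof -
  let ?z = "theta_comp t p x"
  have z: "?z \<in> H" using theta_comp_maps[OF maps p x] .
  have th: "(theta_comp t p has_real_derivative T1 t t1 p x) (at x)"
    and T1d: "(T1 t t1 p has_real_derivative T2 t t1 t2 p x) (at x)"
    using theta_comp_deriv[OF maps d0 d1 p x] by auto
  have bz: "b \<beta> ?z > 0" using bpos be z by auto
  have db: "(b \<beta> has_real_derivative b1 \<beta> ?z) (at ?z)" using e0 be z by auto
  have db1: "(b1 \<beta> has_real_derivative b2 \<beta> ?z) (at ?z)" using e1 be z by auto
  have lnb: "((\<lambda>u. ln (b \<beta> u)) has_real_derivative b1 \<beta> ?z / b \<beta> ?z) (at ?z)"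
    using DERIV_chain2[OF DERIV_ln_divide[OF bz] db] by simp
  have A: "((\<lambda>y. ln (b \<beta> (theta_comp t p y))) has_real_derivative
           b1 \<beta> ?z / b \<beta> ?z * T1 t t1 p x) (at x)"
    using DERIV_chain2[OF lnb th] .
  have r: "((\<lambda>u. b1 \<beta> u / b \<beta> u) has_real_derivative
      (b2 \<beta> ?z / b \<beta> ?z - (b1 \<beta> ?z / b \<beta> ?z)\<^sup>2)) (at ?z)"
  proof -
    have "((\<lambda>u. b1 \<beta> u / b \<beta> u) has_real_derivative
      (b2 \<beta> ?z * b \<beta> ?z - b1 \<beta> ?z * b1 \<beta> ?z) / (b \<beta> ?z * b \<beta> ?z)) (at ?z)"
      using DERIV_divide[OF db1 db] bz by simp
    moreover have "(b2 \<beta> ?z * b \<beta> ?z - b1 \<beta> ?z * b1 \<beta> ?z) / (b \<beta> ?z * b \<beta> ?z)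
        = b2 \<beta> ?z / b \<beta> ?z - (b1 \<beta> ?z / b \<beta> ?z)\<^sup>2"
      using bz by (simp add: field_simps power2_eq_square)
    ultimately show ?thesis by simp
  qed
  have r2: "((\<lambda>y. b1 \<beta> (theta_comp t p y) / b \<beta> (theta_comp t p y)) has_real_derivative
      (b2 \<beta> ?z / b \<beta> ?z - (b1 \<beta> ?z / b \<beta> ?z)\<^sup>2) * T1 t t1 p x) (at x)"
    using DERIV_chain2[OF r th] .
  have B: "((\<lambda>y. b1 \<beta> (theta_comp t p y) / b \<beta> (theta_comp t p y) * T1 t t1 p y) has_real_derivative
      (b2 \<beta> ?z / b \<beta> ?z - (b1 \<beta> ?z / b \<beta> ?z)\<^sup>2) * T1 t t1 p x * T1 t t1 p x
      + b1 \<beta> ?z / b \<beta> ?z * T2 t t1 t2 p x) (at x)"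
    using DERIV_mult[OF r2 T1d] by (simp add: ac_simps)
  show ?thesis using A B by (simp add: power2_eq_square mult.assoc)
qed



lemma T2_bound:
  assumes maps: "\<forall>\<beta>\<in>B. \<forall>x\<in>H. t \<beta> x \<in> H"
    and T1b: "\<And>p y. set p \<subseteq> B \<Longrightarrow> y \<in> H \<Longrightarrow> \<bar>T1 t t1 p y\<bar> \<le> e (length p)"
    and t2b: "\<forall>\<beta>\<in>B. \<forall>y\<in>H. \<bar>t2 \<beta> y\<bar> \<le> M0"
    and "set w \<subseteq> B" "x \<in> H"
  shows "\<bar>T2 t t1 t2 w x\<bar> \<le> M0 * (\<Sum>i<length w. e (length w - 1 - i) * (T1 t t1 (take i w) x)\<^sup>2)"
  using assms(4,5)
proof (induction w arbitrary: x)
  case Nil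
  then show ?case by simp
next
  case (Cons j js)
  have j: "j \<in> B" and js: "set js \<subseteq> B" using Cons.prems by auto
  have tx: "t j x \<in> H" using maps j Cons.prems by auto
  define n where "n = length js"
  define S where "S = (\<Sum>i<n. e (n - 1 - i) * (T1 t t1 (take i js) (t j x))\<^sup>2)"
  have IH: "\<bar>T2 t t1 t2 js (t j x)\<bar> \<le> M0 * S" using Cons.IH[OF js tx] by (simp add: S_def n_def)
  have M0: "0 \<le> M0" using t2b j Cons.prems(2) by (meson abs_ge_zero order_trans)
  have t2x: "\<bar>t2 j x\<bar> \<le> M0" using t2b j Cons.prems(2) by auto
  have T1js: "\<bar>T1 t t1 js (t j x)\<bar> \<le> e n" using T1b[OF js tx] by (simp add: n_def)
  have a1: "\<bar>T2 t t1 t2 js (t j x) * (t1 j x)\<^sup>2\<bar> \<le> M0 * S * (t1 j x)\<^sup>2"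
    using IH by (simp add: abs_mult mult_right_mono)
  have a2: "\<bar>T1 t t1 js (t j x) * t2 j x\<bar> \<le> e n * M0"
    unfolding abs_mult by (rule mult_mono[OF T1js t2x]) (use T1js in auto)
  have "\<bar>T2 t t1 t2 (j # js) x\<bar> \<le> M0 * S * (t1 j x)\<^sup>2 + e n * M0"
    using a1 a2 by simp
  also have "\<dots> = M0 * (\<Sum>i<length (j # js). e (length (j # js) - 1 - i) * (T1 t t1 (take i (j # js)) x)\<^sup>2)"
    unfolding length_Cons n_def[symmetric] sum.lessThan_Suc_shift
    by (simp add: S_def sum_distrib_left sum_distrib_right power_mult_distrib algebra_simps)
  finally show ?case .
qed

lemma double_sum_bound:
  fixes e :: "nat \<Rightarrow> real"
  assumes "\<And>k. e k \<ge> 0"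
  shows "(\<Sum>k<\<nu>. \<Sum>i<k. e (k - 1 - i) * (e i)\<^sup>2) \<le> (\<Sum>k<\<nu>. e k) * (\<Sum>k<\<nu>. (e k)\<^sup>2)"
proof -
  have "(\<Sum>k<\<nu>. \<Sum>i<k. e (k - 1 - i) * (e i)\<^sup>2) \<le> (\<Sum>k\<le>\<nu>. \<Sum>i<k. e (k - 1 - i) * (e i)\<^sup>2)"
    by (rule sum_mono2) (auto intro!: sum_nonneg mult_nonneg_nonneg assms)
  also have "\<dots> = (\<Sum>i<\<nu>. \<Sum>k=Suc i..\<nu>. e (k - 1 - i) * (e i)\<^sup>2)"
    by (rule sum.nested_swap')
  also have "\<dots> \<le> (\<Sum>i<\<nu>. (\<Sum>k<\<nu>. e k) * (e i)\<^sup>2)"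
  proof (rule sum_mono)
    fix i assume i: "i \<in> {..<\<nu>}"
    have inj: "inj_on (\<lambda>k. k - 1 - i) {Suc i..\<nu>}" by (auto simp: inj_on_def)
    have "(\<Sum>k=Suc i..\<nu>. e (k - 1 - i)) = sum e ((\<lambda>k. k - 1 - i) ` {Suc i..\<nu>})"
      using sum.reindex[OF inj, of e] unfolding comp_def by (rule sym)
    also have "\<dots> \<le> sum e {..<\<nu>}"
      by (rule sum_mono2) (use i in \<open>auto intro: assms\<close>)
    finally show "(\<Sum>k=Suc i..\<nu>. e (k - 1 - i) * (e i)\<^sup>2) \<le> (\<Sum>k<\<nu>. e k) * (e i)\<^sup>2"
      by (simp add: sum_distrib_right[symmetric] mult_right_mono)
  qed
  also have "\<dots> = (\<Sum>k<\<nu>. e k) * (\<Sum>k<\<nu>. (e k)\<^sup>2)" by (simp add: sum_distrib_left)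
  finally show ?thesis .
qed



lemma phi_bounds:
  fixes e :: "nat \<Rightarrow> real"
  assumes maps: "\<forall>\<beta>\<in>B. \<forall>x\<in>H. t \<beta> x \<in> H"
    and T1b: "\<And>p y. set p \<subseteq> B \<Longrightarrow> y \<in> H \<Longrightarrow> \<bar>T1 t t1 p y\<bar> \<le> e (length p)"
    and t2b: "\<forall>\<beta>\<in>B. \<forall>y\<in>H. \<bar>t2 \<beta> y\<bar> \<le> M0"
    and rb: "\<forall>\<beta>\<in>B. \<forall>y\<in>H. \<bar>b1 \<beta> y / b \<beta> y\<bar> \<le> C1"
    and qb: "\<forall>\<beta>\<in>B. \<forall>y\<in>H. \<bar>b2 \<beta> y / b \<beta> y\<bar> \<le> C2"
    and e0: "\<And>k. e k \<ge> 0"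
    and w: "set w \<subseteq> B" and x: "x \<in> H"
  defines "r \<equiv> \<lambda>k. b1 (w!k) (theta_comp t (take k w) x) / b (w!k) (theta_comp t (take k w) x)"
    and "q \<equiv> \<lambda>k. b2 (w!k) (theta_comp t (take k w) x) / b (w!k) (theta_comp t (take k w) x)"
  shows "\<bar>\<Sum>k<length w. r k * T1 t t1 (take k w) x\<bar> \<le> C1 * (\<Sum>k<length w. e k)"
    and "(\<Sum>k<length w. (q k - (r k)\<^sup>2) * (T1 t t1 (take k w) x)\<^sup>2 + r k * T2 t t1 t2 (take k w) x)
          \<le> C2 * (\<Sum>k<length w. (e k)\<^sup>2) + C1 * M0 * ((\<Sum>k<length w. e k) * (\<Sum>k<length w. (e k)\<^sup>2))"
    and "(\<Sum>k<length w. (q k - (r k)\<^sup>2) * (T1 t t1 (take k w) x)\<^sup>2 + r k * T2 t t1 t2 (take k w) x)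
          \<ge> - (C1\<^sup>2 + C2) * (\<Sum>k<length w. (e k)\<^sup>2) - C1 * M0 * ((\<Sum>k<length w. e k) * (\<Sum>k<length w. (e k)\<^sup>2))"
proof -
  let ?n = "length w"
  define G where "G = (\<lambda>k. \<Sum>i<k. e (k - 1 - i) * (e i)\<^sup>2)"
  have G0: "G k \<ge> 0" for k unfolding G_def by (auto intro!: sum_nonneg mult_nonneg_nonneg e0)
  have facts: "\<bar>r k\<bar> \<le> C1 \<and> \<bar>q k\<bar> \<le> C2 \<and> \<bar>T1 t t1 (take k w) x\<bar> \<le> e k \<and>
      \<bar>T2 t t1 t2 (take k w) x\<bar> \<le> M0 * G k \<and> 0 \<le> M0" if k: "k < ?n" for k
  proof -
    let ?p = "take k w"
    have p: "set ?p \<subseteq> B" using w by (meson order_trans set_take_subset)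
    have lp: "length ?p = k" using k by simp
    have z: "theta_comp t ?p x \<in> H" using theta_comp_maps[OF maps p x] .
    have be: "w ! k \<in> B" using w k by auto
    have M0: "0 \<le> M0" using t2b be z by (meson abs_ge_zero order_trans)
    have T2p: "\<bar>T2 t t1 t2 ?p x\<bar> \<le> M0 * (\<Sum>i<k. e (k - 1 - i) * (T1 t t1 (take i ?p) x)\<^sup>2)"
      using T2_bound[OF maps T1b t2b p x] lp by simp
    also have "\<dots> \<le> M0 * G k" unfolding G_def
    proof (intro mult_left_mono[OF _ M0] sum_mono mult_left_mono[OF _ e0])
      fix i assume i: "i \<in> {..<k}"
      have pi: "set (take i ?p) \<subseteq> B" using p by (meson order_trans set_take_subset)
      have "\<bar>T1 t t1 (take i ?p) x\<bar> \<le> e i" using T1b[OF pi x] i lp by simp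
      then show "(T1 t t1 (take i ?p) x)\<^sup>2 \<le> (e i)\<^sup>2"
        by (metis abs_ge_zero abs_le_square_iff abs_of_nonneg e0 order_trans)
    qed
    finally show ?thesis using rb qb be z T1b[OF p x] lp M0 unfolding r_def q_def by auto
  qed
  have C1: "k < ?n \<Longrightarrow> 0 \<le> C1" for k using facts[of k] by (meson abs_ge_zero order_trans)
  have C2: "k < ?n \<Longrightarrow> 0 \<le> C2" for k using facts[of k] by (meson abs_ge_zero order_trans)
  have sq: "(T1 t t1 (take k w) x)\<^sup>2 \<le> (e k)\<^sup>2" if "k < ?n" for k
    using facts[OF that] by (metis abs_ge_zero abs_le_square_iff abs_of_nonneg e0 order_trans)
  have DB: "(\<Sum>k<?n. G k) \<le> (\<Sum>k<?n. e k) * (\<Sum>k<?n. (e k)\<^sup>2)"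
    unfolding G_def by (rule double_sum_bound[OF e0])
  have rT2: "\<bar>r k * T2 t t1 t2 (take k w) x\<bar> \<le> C1 * M0 * G k" if "k < ?n" for k
  proof -
    have "\<bar>r k * T2 t t1 t2 (take k w) x\<bar> \<le> C1 * (M0 * G k)"
      unfolding abs_mult using facts[OF that] by (intro mult_mono) auto
    then show ?thesis by (simp add: mult.assoc)
  qed
  show "\<bar>\<Sum>k<?n. r k * T1 t t1 (take k w) x\<bar> \<le> C1 * (\<Sum>k<?n. e k)"
  proof -
    have "\<bar>\<Sum>k<?n. r k * T1 t t1 (take k w) x\<bar> \<le> (\<Sum>k<?n. \<bar>r k * T1 t t1 (take k w) x\<bar>)"
      by (rule sum_abs)
    also have "\<dots> \<le> (\<Sum>k<?n. C1 * e k)"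
      by (rule sum_mono) (use facts C1 in \<open>fastforce simp: abs_mult intro!: mult_mono\<close>)
    finally show ?thesis by (simp add: sum_distrib_left)
  qed
  have up: "(q k - (r k)\<^sup>2) * (T1 t t1 (take k w) x)\<^sup>2 + r k * T2 t t1 t2 (take k w) x
      \<le> C2 * (e k)\<^sup>2 + C1 * M0 * G k" if k: "k < ?n" for k
  proof -
    have "(q k - (r k)\<^sup>2) * (T1 t t1 (take k w) x)\<^sup>2 \<le> q k * (T1 t t1 (take k w) x)\<^sup>2"
      by (simp add: mult_right_mono)
    also have "\<dots> \<le> C2 * (e k)\<^sup>2"
    proof -
      have "q k \<le> C2" using facts[OF k] by auto
      then have "q k * (T1 t t1 (take k w) x)\<^sup>2 \<le> C2 * (T1 t t1 (take k w) x)\<^sup>2"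
        by (simp add: mult_right_mono)
      also have "\<dots> \<le> C2 * (e k)\<^sup>2" using sq[OF k] C2 k by (intro mult_left_mono) auto
      finally show ?thesis .
    qed
    finally show ?thesis using rT2[OF k] by linarith
  qed
  have lo: "(q k - (r k)\<^sup>2) * (T1 t t1 (take k w) x)\<^sup>2 + r k * T2 t t1 t2 (take k w) x
      \<ge> - (C1\<^sup>2 + C2) * (e k)\<^sup>2 - C1 * M0 * G k" if k: "k < ?n" for k
  proof -
    have c: "q k - (r k)\<^sup>2 \<ge> - (C1\<^sup>2 + C2)"
    proof -
      have "(r k)\<^sup>2 \<le> C1\<^sup>2" using facts[OF k]
        by (metis abs_ge_zero abs_le_square_iff abs_of_nonneg order_trans)
      moreover have "q k \<ge> - C2" using facts[OF k] by auto
      ultimately show ?thesis by linarith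
    qed
    have nn: "0 \<le> C1\<^sup>2 + C2" using C2 k by (simp add: add_nonneg_nonneg)
    have "- (C1\<^sup>2 + C2) * (e k)\<^sup>2 \<le> - (C1\<^sup>2 + C2) * (T1 t t1 (take k w) x)\<^sup>2"
      using mult_left_mono[OF sq[OF k] nn] by (simp add: algebra_simps)
    also have "\<dots> \<le> (q k - (r k)\<^sup>2) * (T1 t t1 (take k w) x)\<^sup>2"
      using c by (simp add: mult_right_mono)
    finally show ?thesis using rT2[OF k] by linarith
  qed
  show "(\<Sum>k<?n. (q k - (r k)\<^sup>2) * (T1 t t1 (take k w) x)\<^sup>2 + r k * T2 t t1 t2 (take k w) x)
          \<le> C2 * (\<Sum>k<?n. (e k)\<^sup>2) + C1 * M0 * ((\<Sum>k<?n. e k) * (\<Sum>k<?n. (e k)\<^sup>2))"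
  proof (cases "?n = 0")
    case True then show ?thesis by simp
  next
    case False
    have "(\<Sum>k<?n. (q k - (r k)\<^sup>2) * (T1 t t1 (take k w) x)\<^sup>2 + r k * T2 t t1 t2 (take k w) x)
        \<le> (\<Sum>k<?n. C2 * (e k)\<^sup>2 + C1 * M0 * G k)" by (rule sum_mono) (use up in auto)
    also have "\<dots> = C2 * (\<Sum>k<?n. (e k)\<^sup>2) + C1 * M0 * (\<Sum>k<?n. G k)"
      by (simp add: sum.distrib sum_distrib_left)
    also have "\<dots> \<le> C2 * (\<Sum>k<?n. (e k)\<^sup>2) + C1 * M0 * ((\<Sum>k<?n. e k) * (\<Sum>k<?n. (e k)\<^sup>2))"
      using DB C1[of 0] facts[of 0] False by (simp add: mult_left_mono)
    finally show ?thesis .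
  qed
  show "(\<Sum>k<?n. (q k - (r k)\<^sup>2) * (T1 t t1 (take k w) x)\<^sup>2 + r k * T2 t t1 t2 (take k w) x)
          \<ge> - (C1\<^sup>2 + C2) * (\<Sum>k<?n. (e k)\<^sup>2) - C1 * M0 * ((\<Sum>k<?n. e k) * (\<Sum>k<?n. (e k)\<^sup>2))"
  proof (cases "?n = 0")
    case True then show ?thesis by simp
  next
    case False
    have "- (C1\<^sup>2 + C2) * (\<Sum>k<?n. (e k)\<^sup>2) - C1 * M0 * ((\<Sum>k<?n. e k) * (\<Sum>k<?n. (e k)\<^sup>2))
        \<le> - (C1\<^sup>2 + C2) * (\<Sum>k<?n. (e k)\<^sup>2) - C1 * M0 * (\<Sum>k<?n. G k)"
      using DB C1[of 0] facts[of 0] False by (simp add: mult_left_mono)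
    also have "\<dots> = (\<Sum>k<?n. - (C1\<^sup>2 + C2) * (e k)\<^sup>2 - C1 * M0 * G k)"
      by (simp add: sum_subtractf sum_distrib_left)
    also have "\<dots> \<le> (\<Sum>k<?n. (q k - (r k)\<^sup>2) * (T1 t t1 (take k w) x)\<^sup>2 + r k * T2 t t1 t2 (take k w) x)"
      by (rule sum_mono) (use lo in auto)
    finally show ?thesis .
  qed
qed



lemma interior_formula:
  assumes maps: "\<forall>\<beta>\<in>B. \<forall>x\<in>H. t \<beta> x \<in> H"
    and d0: "\<forall>\<beta>\<in>B. \<forall>x\<in>H. (t \<beta> has_real_derivative t1 \<beta> x) (at x)"
    and d1: "\<forall>\<beta>\<in>B. \<forall>x\<in>H. (t1 \<beta> has_real_derivative t2 \<beta> x) (at x)"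
    and e0: "\<forall>\<beta>\<in>B. \<forall>x\<in>H. (b \<beta> has_real_derivative b1 \<beta> x) (at x)"
    and e1: "\<forall>\<beta>\<in>B. \<forall>x\<in>H. (b1 \<beta> has_real_derivative b2 \<beta> x) (at x)"
    and bpos: "\<forall>\<beta>\<in>B. \<forall>x\<in>H. b \<beta> x > 0"
    and oH: "open H" and HK: "H \<subseteq> K"
    and w: "set w \<subseteq> B" and xi: "\<xi> \<in> H"
    and hF1: "\<forall>y\<in>K. ((\<lambda>z. b_comp b t w z powr s) has_real_derivative F1 y) (at y within K)"
    and hF2: "\<forall>y\<in>K. (F1 has_real_derivative F2 y) (at y within K)"
  shows "b_comp b t w \<xi> > 0 \<and> F2 \<xi> = (s * (\<Sum>k<length w.
       (b2 (w!k) (theta_comp t (take k w) \<xi>) / b (w!k) (theta_comp t (take k w) \<xi>)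
        - (b1 (w!k) (theta_comp t (take k w) \<xi>) / b (w!k) (theta_comp t (take k w) \<xi>))\<^sup>2)
        * (T1 t t1 (take k w) \<xi>)\<^sup>2
       + b1 (w!k) (theta_comp t (take k w) \<xi>) / b (w!k) (theta_comp t (take k w) \<xi>)
        * T2 t t1 t2 (take k w) \<xi>)
     + s\<^sup>2 * (\<Sum>k<length w. b1 (w!k) (theta_comp t (take k w) \<xi>) / b (w!k) (theta_comp t (take k w) \<xi>)
          * T1 t t1 (take k w) \<xi>)\<^sup>2) * b_comp b t w \<xi> powr s"
proof -
  let ?n = "length w"
  define P where "P k = take k w" for k
  define l where "l y = (\<Sum>k<?n. ln (b (w!k) (theta_comp t (P k) y)))" for y
  define f1 where "f1 y = (\<Sum>k<?n. b1 (w!k) (theta_comp t (P k) y) / b (w!k) (theta_comp t (P k) y)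
          * T1 t t1 (P k) y)" for y
  define f2 where "f2 y = (\<Sum>k<?n.
       (b2 (w!k) (theta_comp t (P k) y) / b (w!k) (theta_comp t (P k) y)
        - (b1 (w!k) (theta_comp t (P k) y) / b (w!k) (theta_comp t (P k) y))\<^sup>2)
        * (T1 t t1 (P k) y)\<^sup>2
       + b1 (w!k) (theta_comp t (P k) y) / b (w!k) (theta_comp t (P k) y)
        * T2 t t1 t2 (P k) y)" for y
  have Pk: "set (P k) \<subseteq> B" for k unfolding P_def using w by (meson order_trans set_take_subset)
  have wk: "k < ?n \<Longrightarrow> w ! k \<in> B" for k using w by auto
  have dl: "(l has_real_derivative f1 y) (at y)" if y: "y \<in> H" for y
    unfolding l_def f1_def
    by (rule DERIV_sum) (use term_deriv[OF maps d0 d1 e0 e1 bpos Pk wk y] in auto)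
  have df1: "(f1 has_real_derivative f2 y) (at y)" if y: "y \<in> H" for y
  proof -
    have "((\<lambda>y. \<Sum>k<?n. b1 (w!k) (theta_comp t (P k) y) / b (w!k) (theta_comp t (P k) y)
          * T1 t t1 (P k) y) has_real_derivative f2 y) (at y)"
      unfolding f2_def
      by (rule DERIV_sum) (use term_deriv[OF maps d0 d1 e0 e1 bpos Pk wk y] in auto)
    moreover have "f1 = (\<lambda>y. \<Sum>k<?n. b1 (w!k) (theta_comp t (P k) y) / b (w!k) (theta_comp t (P k) y)
          * T1 t t1 (P k) y)" unfolding f1_def by (rule ext) simp
    ultimately show ?thesis by simp
  qed
  have bpos': "b_comp b t w y > 0" and Qe: "b_comp b t w y powr s = exp (s * l y)" if y: "y \<in> H" for y
  proof -
    have pos: "b (w!k) (theta_comp t (P k) y) > 0" if "k < ?n" for k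
      using bpos wk[OF that] theta_comp_maps[OF maps Pk y] by auto
    have bc: "b_comp b t w y = (\<Prod>k<?n. b (w!k) (theta_comp t (P k) y))"
      unfolding b_comp_prod P_def ..
    show "b_comp b t w y > 0" unfolding bc using pos by (auto intro!: prod_pos)
    then show "b_comp b t w y powr s = exp (s * l y)"
    proof -
      have "ln (\<Prod>k<?n. b (w!k) (theta_comp t (P k) y)) = (\<Sum>k<?n. ln (b (w!k) (theta_comp t (P k) y)))"
        by (rule ln_prod) (use pos in force)+
      moreover have "\<forall>a\<in>{..<?n}. b (w!a) (theta_comp t (P a) y) \<noteq> 0" using pos by force
      ultimately show ?thesis unfolding powr_def l_def bc using \<open>b_comp b t w y > 0\<close> bc by simp
    qed
  qed
  define G where "G y = exp (s * l y)" for y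
  have dG: "(G has_real_derivative G y * (s * f1 y)) (at y)" if "y \<in> H" for y
    unfolding G_def using DERIV_chain2[OF DERIV_exp DERIV_cmult[OF dl[OF that], of s]] by simp
  have F1e: "F1 y = G y * (s * f1 y)" if y: "y \<in> H" for y
  proof -
    have yK: "y \<in> interior K" using y oH HK interior_maximal by blast
    have "((\<lambda>z. b_comp b t w z powr s) has_real_derivative F1 y) (at y within K)"
      using hF1 y HK by blast
    then have "((\<lambda>z. b_comp b t w z powr s) has_real_derivative F1 y) (at y)"
      unfolding at_within_interior[OF yK] .
    then have "(G has_real_derivative F1 y) (at y)"
      by (rule has_field_derivative_transform_within_open[OF _ oH y]) (simp add: Qe G_def)
    then show ?thesis using dG[OF y] DERIV_unique by blast
  qed
  have dG1: "((\<lambda>y. G y * (s * f1 y)) has_real_derivative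
      G \<xi> * (s * f1 \<xi>) * (s * f1 \<xi>) + G \<xi> * (s * f2 \<xi>)) (at \<xi>)"
    using DERIV_mult[OF dG[OF xi] DERIV_cmult[OF df1[OF xi], of s]] by (simp add: ac_simps)
  have xiK: "\<xi> \<in> interior K" using xi oH HK interior_maximal by blast
  have "(F1 has_real_derivative F2 \<xi>) (at \<xi> within K)"
    using hF2 xi HK by blast
  then have "(F1 has_real_derivative F2 \<xi>) (at \<xi>)"
    unfolding at_within_interior[OF xiK] .
  then have "((\<lambda>y. G y * (s * f1 y)) has_real_derivative F2 \<xi>) (at \<xi>)"
    by (rule has_field_derivative_transform_within_open[OF _ oH xi]) (simp add: F1e)
  then have "F2 \<xi> = G \<xi> * (s * f1 \<xi>) * (s * f1 \<xi>) + G \<xi> * (s * f2 \<xi>)"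
    using dG1 DERIV_unique by blast
  also have "\<dots> = (s * f2 \<xi> + s\<^sup>2 * (f1 \<xi>)\<^sup>2) * b_comp b t w \<xi> powr s"
    using Qe[OF xi] by (simp add: G_def algebra_simps power2_eq_square)
  finally show ?thesis using bpos'[OF xi] unfolding f1_def f2_def P_def by simp
qed



lemma boundary_bound:
  fixes F1 F2 Q :: "real \<Rightarrow> real"
  assumes cd: "c < d" and x: "x \<in> {c..d}" and cdH: "{c<..<d} \<subseteq> H" and cdK: "{c..d} \<subseteq> K"
    and HK: "H \<subseteq> K" and oH: "open H"
    and dF1: "\<forall>y\<in>K. (F1 has_real_derivative F2 y) (at y within K)"
    and Qc: "continuous (at x within K) Q"
    and bnd: "\<forall>\<xi>\<in>H. F2 \<xi> \<le> U * Q \<xi>"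
    and U: "U \<ge> 0"
  shows "F2 x \<le> U * Q x"
proof (rule ccontr)
  assume "\<not> F2 x \<le> U * Q x"
  then have g: "F2 x - U * Q x > 0" by simp
  define e where "e = (F2 x - U * Q x) / (2 * (U + 1))"
  have e: "e > 0" using g U by (simp add: e_def)
  have Ue: "U * e < F2 x - U * Q x"
  proof -
    have "U * e = (F2 x - U * Q x) * (U / (2 * (U + 1)))" by (simp add: e_def)
    also have "\<dots> < (F2 x - U * Q x) * 1"
      using g U by (intro mult_strict_left_mono) auto
    finally show ?thesis by simp
  qed
  obtain \<delta> where \<delta>: "\<delta> > 0" "\<forall>z\<in>K. dist z x < \<delta> \<longrightarrow> dist (Q z) (Q x) < e"
    using Qc e unfolding continuous_within_eps_delta by blast
  have xK: "x \<in> K" using x cdK by auto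
  have "(F1 has_real_derivative F2 x) (at x within {c<..<d})"
    using dF1 xK DERIV_subset cdH HK by blast
  then have "((\<lambda>y. (F1 y - F1 x) / (y - x)) \<longlongrightarrow> F2 x) (at x within {c<..<d})"
    unfolding has_field_derivative_iff .
  then have "eventually (\<lambda>y. (F1 y - F1 x) / (y - x) > U * (Q x + e)) (at x within {c<..<d})"
    using Ue by (intro order_tendstoD(1)) (auto simp: algebra_simps)
  then obtain d1 where d1: "d1 > 0" "\<forall>y\<in>{c<..<d}. y \<noteq> x \<and> dist y x < d1 \<longrightarrow>
      (F1 y - F1 x) / (y - x) > U * (Q x + e)"
    unfolding eventually_at by blast
  define m where "m = min \<delta> d1"
  have m: "m > 0" using \<delta> d1 by (simp add: m_def)
  obtain y where y: "y \<in> {c<..<d}" "y \<noteq> x" "dist y x < m"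
  proof (cases "x < d")
    case True
    obtain r where r: "0 < r" "r \<le> m" "r \<le> d - x" using True m
      by (metis diff_gt_0_iff_gt min.cobounded1 min.cobounded2 min_less_iff_conj)
    have "x + r / 2 \<in> {c<..<d} \<and> x + r / 2 \<noteq> x \<and> dist (x + r / 2) x < m"
      using r x unfolding dist_real_def by auto
    then show ?thesis using that by blast
  next
    case False
    then have xd: "x = d" using x by auto
    obtain r where r: "0 < r" "r \<le> m" "r \<le> d - c" using cd m
      by (metis diff_gt_0_iff_gt min.cobounded1 min.cobounded2 min_less_iff_conj)
    have "x - r / 2 \<in> {c<..<d} \<and> x - r / 2 \<noteq> x \<and> dist (x - r / 2) x < m"
      using r xd unfolding dist_real_def by auto
    then show ?thesis using that by blast
  qed
  have q: "(F1 y - F1 x) / (y - x) > U * (Q x + e)" using d1 y m_def by auto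
  define a where "a = min x y"
  define b where "b = max x y"
  have ab: "a < b" using y by (auto simp: a_def b_def)
  have abcd: "{a..b} \<subseteq> {c..d}" using x y by (auto simp: a_def b_def)
  have contK: "continuous_on K F1"
    unfolding continuous_on_eq_continuous_within using dF1 DERIV_continuous by blast
  have cont: "continuous_on {a..b} F1" using continuous_on_subset[OF contK] abcd cdK by blast
  have inH: "z \<in> H" if "a < z" "z < b" for z
  proof -
    have "z \<in> {c<..<d}" using that x y by (auto simp: a_def b_def min_def max_def split: if_splits)
    then show ?thesis using cdH by blast
  qed
  have dz: "(F1 has_real_derivative F2 z) (at z)" if "z \<in> H" for z
  proof -
    have zK: "z \<in> interior K" using that oH HK interior_maximal by blast
    have "(F1 has_real_derivative F2 z) (at z within K)" using dF1 that HK by blast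
    then show ?thesis unfolding at_within_interior[OF zK] .
  qed
  obtain l z where z: "a < z" "z < b" "DERIV F1 z :> l" "F1 b - F1 a = (b - a) * l"
    using MVT[OF ab cont] inH dz
    by (metis differentiableI has_field_derivative_imp_has_derivative)
  have lz: "l = F2 z" using DERIV_unique[OF z(3) dz[OF inH[OF z(1,2)]]] .
  have "(F1 y - F1 x) / (y - x) = (F1 b - F1 a) / (b - a)"
    using y(2) by (cases "x < y") (auto simp: a_def b_def field_simps)
  also have "\<dots> = F2 z" using z(4) ab lz by simp
  also have "\<dots> \<le> U * Q z" using bnd inH[OF z(1,2)] by auto
  also have "\<dots> \<le> U * (Q x + e)"
  proof -
    have "dist z x < \<delta>" using z(1,2) y m_def by (auto simp: a_def b_def dist_real_def)
    then have "dist (Q z) (Q x) < e" using \<delta> inH[OF z(1,2)] HK by auto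
    then have "Q z \<le> Q x + e" by (simp add: dist_real_def)
    then show ?thesis using U by (simp add: mult_left_mono)
  qed
  finally show False using q by simp
qed



lemma finite_ub:
  fixes P :: "'a \<Rightarrow> real \<Rightarrow> bool"
  assumes "finite B" "\<forall>\<beta>\<in>B. \<exists>M. P \<beta> M" "\<And>\<beta> M M'. P \<beta> M \<Longrightarrow> M \<le> M' \<Longrightarrow> P \<beta> M'"
  shows "\<exists>M. \<forall>\<beta>\<in>B. P \<beta> M"
  using assms(1,2)
proof (induction B rule: finite_induct)
  case empty then show ?case by simp
next
  case (insert a F)
  then obtain M where M: "\<forall>\<beta>\<in>F. P \<beta> M" by auto
  obtain M' where M': "P a M'" using insert by auto
  have "\<forall>\<beta>\<in>insert a F. P \<beta> (max M M')"
    using M M' assms(3) by (metis insert_iff max.cobounded1 max.cobounded2)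
  then show ?case by blast
qed

lemma finite_lb:
  fixes P :: "'a \<Rightarrow> real \<Rightarrow> bool"
  assumes "finite B" "\<forall>\<beta>\<in>B. \<exists>M>0. P \<beta> M" "\<And>\<beta> M M'. P \<beta> M \<Longrightarrow> 0 < M' \<Longrightarrow> M' \<le> M \<Longrightarrow> P \<beta> M'"
  shows "\<exists>M>0. \<forall>\<beta>\<in>B. P \<beta> M"
  using assms(1,2)
proof (induction B rule: finite_induct)
  case empty then show ?case by (auto intro: exI[of _ 1])
next
  case (insert a F)
  then obtain M where M: "M > 0" "\<forall>\<beta>\<in>F. P \<beta> M" by auto
  obtain M' where M': "M' > 0" "P a M'" using insert by auto
  have "\<forall>\<beta>\<in>insert a F. P \<beta> (min M M')"
    using M M' assms(3) by (metis insert_iff min.cobounded1 min.cobounded2 min_less_iff_conj)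
  then show ?case using M M' by (metis min_less_iff_conj)
qed

lemma gap:
  fixes n :: nat
  assumes cd: "\<forall>j\<in>{1..n}. c j < (d j::real)"
    and disj: "\<forall>i\<in>{1..n}. \<forall>j\<in>{1..n}. i \<noteq> j \<longrightarrow> {c i..d i} \<inter> {c j..d j} = {}"
  shows "\<exists>\<delta>>0. \<forall>ij\<in>{1..n}\<times>{1..n}. fst ij \<noteq> snd ij \<longrightarrow>
      (\<forall>x\<in>{c (fst ij)..d (fst ij)}. \<forall>y\<in>{c (snd ij)..d (snd ij)}. \<delta> \<le> \<bar>x - y\<bar>)"
proof (rule finite_lb)
  show "\<forall>ij\<in>{1..n}\<times>{1..n}. \<exists>M>0. fst ij \<noteq> snd ij \<longrightarrow>
      (\<forall>x\<in>{c (fst ij)..d (fst ij)}. \<forall>y\<in>{c (snd ij)..d (snd ij)}. M \<le> \<bar>x - y\<bar>)"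
  proof
    fix ij assume ij: "ij \<in> {1..n}\<times>{1..n}"
    obtain i j where ijd: "ij = (i, j)" by fastforce
    have i: "i \<in> {1..n}" and j: "j \<in> {1..n}" using ij ijd by auto
    show "\<exists>M>0. fst ij \<noteq> snd ij \<longrightarrow>
      (\<forall>x\<in>{c (fst ij)..d (fst ij)}. \<forall>y\<in>{c (snd ij)..d (snd ij)}. M \<le> \<bar>x - y\<bar>)"
    proof (cases "i = j")
      case True then show ?thesis using ijd by (auto intro: exI[of _ 1])
    next
      case False
      have ci: "c i < d i" and cj: "c j < d j" using cd i j by auto
      have dis: "{c i..d i} \<inter> {c j..d j} = {}" using disj i j False by auto
      have pos: "max (c j - d i) (c i - d j) > 0"
      proof (rule ccontr)
        assume "\<not> ?thesis"
        then have "c j \<le> d i" "c i \<le> d j" by auto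
        then have "max (c i) (c j) \<in> {c i..d i} \<inter> {c j..d j}" using ci cj by auto
        then show False using dis by blast
      qed
      have "\<forall>x\<in>{c i..d i}. \<forall>y\<in>{c j..d j}. max (c j - d i) (c i - d j) \<le> \<bar>x - y\<bar>"
        by auto
      then show ?thesis using pos ijd by auto
    qed
  qed
next
  show "finite ({1..n}\<times>{1..n})" by simp
next
  fix ij and \<delta> M' :: real
  assume "fst ij \<noteq> snd ij \<longrightarrow>
         (\<forall>x\<in>{c (fst ij)..d (fst ij)}. \<forall>y\<in>{c (snd ij)..d (snd ij)}. \<delta> \<le> \<bar>x - y\<bar>)"
    "0 < M'" "M' \<le> \<delta>"
  then show "fst ij \<noteq> snd ij \<longrightarrow>
         (\<forall>x\<in>{c (fst ij)..d (fst ij)}. \<forall>y\<in>{c (snd ij)..d (snd ij)}. M' \<le> \<bar>x - y\<bar>)"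
    by (meson order_trans)
qed

lemma bounded_on_compact:
  fixes g :: "real \<Rightarrow> real"
  assumes "continuous_on K g" "compact K"
  shows "\<exists>M. \<forall>x\<in>K. \<bar>g x\<bar> \<le> M"
proof -
  have "bounded (g ` K)" using compact_imp_bounded[OF compact_continuous_image[OF assms]] .
  then show ?thesis unfolding bounded_iff by auto
qed

lemma lip_union:
  fixes f f' :: "real \<Rightarrow> real"
  assumes cd: "\<forall>j\<in>{1..n}. c j < (d j::real)"
    and disj: "\<forall>i\<in>{1..n}. \<forall>j\<in>{1..n}. i \<noteq> j \<longrightarrow> {c i..d i} \<inter> {c j..d j} = {}"
    and fb: "\<forall>x\<in>union_intervals n c d. \<bar>f x\<bar> \<le> A"
    and der: "\<forall>x\<in>union_intervals n c d. (f has_real_derivative f' x) (at x)"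
    and f'b: "\<forall>x\<in>union_intervals n c d. \<bar>f' x\<bar> \<le> A'"
  shows "\<exists>L\<ge>0. \<forall>x\<in>union_intervals n c d. \<forall>y\<in>union_intervals n c d. \<bar>f x - f y\<bar> \<le> L * \<bar>x - y\<bar>"
proof -
  obtain \<delta> where \<delta>: "\<delta> > 0" "\<forall>ij\<in>{1..n}\<times>{1..n}. fst ij \<noteq> snd ij \<longrightarrow>
      (\<forall>x\<in>{c (fst ij)..d (fst ij)}. \<forall>y\<in>{c (snd ij)..d (snd ij)}. \<delta> \<le> \<bar>x - y\<bar>)"
    using gap[OF cd disj] by blast
  define L where "L = \<bar>A'\<bar> + 2 * \<bar>A\<bar> / \<delta>"
  have L0: "L \<ge> 0" using \<delta> by (simp add: L_def)
  have "\<bar>f x - f y\<bar> \<le> L * \<bar>x - y\<bar>" if x: "x \<in> union_intervals n c d" and y: "y \<in> union_intervals n c d" for x y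
  proof -
    obtain i where i: "i \<in> {1..n}" "x \<in> {c i<..<d i}" using x unfolding union_intervals_def by blast
    obtain j where j: "j \<in> {1..n}" "y \<in> {c j<..<d j}" using y unfolding union_intervals_def by blast
    show ?thesis
    proof (cases "i = j")
      case True
      have sub: "{c i<..<d i} \<subseteq> union_intervals n c d" using i unfolding union_intervals_def by blast
      have "norm (f x - f y) \<le> A' * norm (x - y)"
      proof (rule field_differentiable_bound[of "{c i<..<d i}" f f'])
        show "convex {c i<..<d i}" by simp
        show "\<And>z. z \<in> {c i<..<d i} \<Longrightarrow> (f has_field_derivative f' z) (at z within {c i<..<d i})"
          using der sub by (blast intro: has_field_derivative_at_within)
        show "\<And>z. z \<in> {c i<..<d i} \<Longrightarrow> norm (f' z) \<le> A'" using f'b sub by auto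
      qed (use i j True in auto)
      then have "\<bar>f x - f y\<bar> \<le> A' * \<bar>x - y\<bar>" by simp
      also have "\<dots> \<le> L * \<bar>x - y\<bar>"
      proof -
        have "0 \<le> 2 * \<bar>A\<bar> / \<delta>" using \<delta> by simp
        then have "A' \<le> L" unfolding L_def by linarith
        then show ?thesis by (intro mult_right_mono) auto
      qed
      finally show ?thesis .
    next
      case False
      have "\<delta> \<le> \<bar>x - y\<bar>" using \<delta>(2) i j False by fastforce
      have "\<bar>f x - f y\<bar> \<le> 2 * \<bar>A\<bar>" using fb x y by (smt (verit))
      also have "\<dots> = (2 * \<bar>A\<bar> / \<delta>) * \<delta>" using \<delta> by simp
      also have "\<dots> \<le> (2 * \<bar>A\<bar> / \<delta>) * \<bar>x - y\<bar>"
        using \<open>\<delta> \<le> \<bar>x - y\<bar>\<close> \<delta> by (intro mult_left_mono) auto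
      also have "\<dots> \<le> L * \<bar>x - y\<bar>" unfolding L_def by (intro mult_right_mono) auto
      finally show ?thesis .
    qed
  qed
  then show ?thesis using L0 by blast
qed



lemma theta_comp_append: "theta_comp t (u @ v) = theta_comp t v \<circ> theta_comp t u"
  by (induction u) (auto simp: fun_eq_iff)

lemma lip_comp:
  assumes maps: "\<forall>\<beta>\<in>B. \<forall>x\<in>H. t \<beta> x \<in> H"
    and lip: "\<forall>\<beta>\<in>B. \<forall>x\<in>H. \<forall>y\<in>H. \<bar>t \<beta> x - t \<beta> y\<bar> \<le> L * \<bar>x - y\<bar>"
    and L: "L \<ge> 0" and w: "set w \<subseteq> B" and x: "x \<in> H" and y: "y \<in> H"
  shows "\<bar>theta_comp t w x - theta_comp t w y\<bar> \<le> L ^ length w * \<bar>x - y\<bar>"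
  using w x y
proof (induction w arbitrary: x y)
  case Nil then show ?case by simp
next
  case (Cons j js)
  have j: "j \<in> B" and js: "set js \<subseteq> B" using Cons.prems by auto
  have "\<bar>theta_comp t (j # js) x - theta_comp t (j # js) y\<bar>
      = \<bar>theta_comp t js (t j x) - theta_comp t js (t j y)\<bar>" by simp
  also have "\<dots> \<le> L ^ length js * \<bar>t j x - t j y\<bar>"
    using Cons.IH[OF js] maps j Cons.prems by auto
  also have "\<dots> \<le> L ^ length js * (L * \<bar>x - y\<bar>)"
    using lip j Cons.prems L by (intro mult_left_mono) auto
  finally show ?case by (simp add: ac_simps)
qed

lemma deriv_lip_bound:
  fixes f :: "real \<Rightarrow> real"
  assumes "(f has_real_derivative D) (at x)" "open H" "x \<in> H"
    and "\<forall>y\<in>H. \<bar>f y - f x\<bar> \<le> L * \<bar>y - x\<bar>"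
  shows "\<bar>D\<bar> \<le> L"
proof -
  have "((\<lambda>y. (f y - f x) / (y - x)) \<longlongrightarrow> D) (at x)"
    using assms(1) unfolding has_field_derivative_iff .
  then have lim: "((\<lambda>y. \<bar>(f y - f x) / (y - x)\<bar>) \<longlongrightarrow> \<bar>D\<bar>) (at x)" by (rule tendsto_rabs)
  have "eventually (\<lambda>y. y \<in> H) (at x)" using assms(2,3) eventually_at_topological by blast
  then have "eventually (\<lambda>y. \<bar>(f y - f x) / (y - x)\<bar> \<le> L) (at x)"
  proof (rule eventually_mono[OF eventually_conj[OF _ eventually_neq_at_within[of x]]])
    fix y assume "y \<in> H \<and> y \<noteq> x"
    then show "\<bar>(f y - f x) / (y - x)\<bar> \<le> L"
      using assms(4) by (auto simp: abs_divide pos_divide_le_eq)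
  qed
  then show ?thesis using tendsto_upperbound[OF lim] by simp
qed

locale epsset =
  fixes B :: "'b set" and t :: "'b \<Rightarrow> real \<Rightarrow> real" and H :: "real set" and L :: real
  assumes oH: "open H" and Hne: "H \<noteq> {}" and Bne: "B \<noteq> {}"
    and maps: "\<forall>\<beta>\<in>B. \<forall>x\<in>H. t \<beta> x \<in> H"
    and lip: "\<forall>\<beta>\<in>B. \<forall>x\<in>H. \<forall>y\<in>H. \<bar>t \<beta> x - t \<beta> y\<bar> \<le> L * \<bar>x - y\<bar>"
    and L: "L \<ge> 0"
begin

definition S where "S \<nu> = {\<bar>theta_comp t w x - theta_comp t w y\<bar> / \<bar>x - y\<bar> | w x y.
            w \<in> words B \<nu> \<and> x \<in> H \<and> y \<in> H \<and> x \<noteq> y}"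

lemma eps_S: "\<nu> \<noteq> 0 \<Longrightarrow> eps B t H \<nu> = Sup (S \<nu>)"
  unfolding eps_def S_def by simp

lemma S_bdd: "bdd_above (S \<nu>)"
proof -
  have "z \<le> L ^ \<nu>" if "z \<in> S \<nu>" for z
  proof -
    obtain w x y where z: "z = \<bar>theta_comp t w x - theta_comp t w y\<bar> / \<bar>x - y\<bar>"
      and w: "w \<in> words B \<nu>" and xy: "x \<in> H" "y \<in> H" "x \<noteq> y"
      using \<open>z \<in> S \<nu>\<close> unfolding S_def by blast
    have "\<bar>theta_comp t w x - theta_comp t w y\<bar> \<le> L ^ \<nu> * \<bar>x - y\<bar>"
      using lip_comp[OF maps lip L _ xy(1,2), of w] w unfolding words_def by auto
    then show ?thesis unfolding z using xy by (simp add: pos_divide_le_eq)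
  qed
  then show ?thesis unfolding bdd_above_def by blast
qed

lemma S_ne: "S \<nu> \<noteq> {}"
proof -
  obtain x0 where x0: "x0 \<in> H" using Hne by blast
  obtain r where r: "r > 0" "ball x0 r \<subseteq> H" using oH x0 open_contains_ball by blast
  have x1: "x0 + r / 2 \<in> H" using r by (auto simp: dist_real_def intro!: subsetD[OF r(2)])
  obtain \<beta> where be: "\<beta> \<in> B" using Bne by blast
  have "replicate \<nu> \<beta> \<in> words B \<nu>" using be unfolding words_def by auto
  then have "\<bar>theta_comp t (replicate \<nu> \<beta>) x0 - theta_comp t (replicate \<nu> \<beta>) (x0 + r / 2)\<bar> / \<bar>x0 - (x0 + r / 2)\<bar> \<in> S \<nu>"
    unfolding S_def using x0 x1 r by fastforce
  then show ?thesis by blast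
qed

lemma eps_nonneg: "eps B t H \<nu> \<ge> 0"
proof (cases "\<nu> = 0")
  case True then show ?thesis by (simp add: eps_def)
next
  case False
  obtain z where z: "z \<in> S \<nu>" using S_ne by blast
  have "0 \<le> z" using z unfolding S_def by auto
  also have "z \<le> Sup (S \<nu>)" by (rule cSup_upper[OF z S_bdd])
  finally show ?thesis using eps_S[OF False] by simp
qed

lemma eps0: "eps B t H 0 = 1" by (simp add: eps_def)

lemma eps_lip:
  assumes w: "set w \<subseteq> B" and x: "x \<in> H" and y: "y \<in> H"
  shows "\<bar>theta_comp t w x - theta_comp t w y\<bar> \<le> eps B t H (length w) * \<bar>x - y\<bar>"
proof (cases "x = y")
  case True then show ?thesis by simp
next
  case False
  show ?thesis
  proof (cases "length w = 0")
    case True then show ?thesis by (simp add: eps_def)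
  next
    case nz: False
    have "\<bar>theta_comp t w x - theta_comp t w y\<bar> / \<bar>x - y\<bar> \<in> S (length w)"
      unfolding S_def words_def using w x y False by blast
    then have "\<bar>theta_comp t w x - theta_comp t w y\<bar> / \<bar>x - y\<bar> \<le> eps B t H (length w)"
      using cSup_upper[OF _ S_bdd] eps_S[OF nz] by simp
    then show ?thesis using False by (simp add: pos_divide_le_eq)
  qed
qed

lemma eps_submult: "eps B t H (a + b) \<le> eps B t H a * eps B t H b"
proof (cases "a + b = 0")
  case True then show ?thesis by (simp add: eps_def)
next
  case False
  have "Sup (S (a + b)) \<le> eps B t H a * eps B t H b"
  proof (rule cSup_least[OF S_ne])
    fix z assume "z \<in> S (a + b)"
    then obtain w x y where z: "z = \<bar>theta_comp t w x - theta_comp t w y\<bar> / \<bar>x - y\<bar>"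
      and w: "w \<in> words B (a + b)" and xy: "x \<in> H" "y \<in> H" "x \<noteq> y"
      unfolding S_def by blast
    define u where "u = take a w"
    define v where "v = drop a w"
    have wuv: "w = u @ v" by (simp add: u_def v_def)
    have lu: "length u = a" and lv: "length v = b" using w by (auto simp: u_def v_def words_def)
    have sw: "set w \<subseteq> B" using w unfolding words_def by blast
    have su: "set u \<subseteq> B" using sw unfolding u_def by (meson order_trans set_take_subset)
    have sv: "set v \<subseteq> B" using sw unfolding v_def by (meson order_trans set_drop_subset)
    have hu: "theta_comp t u x \<in> H" "theta_comp t u y \<in> H"
      using theta_comp_maps[OF maps su] xy by auto
    have "\<bar>theta_comp t w x - theta_comp t w y\<bar>
        = \<bar>theta_comp t v (theta_comp t u x) - theta_comp t v (theta_comp t u y)\<bar>"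
      by (simp add: wuv theta_comp_append)
    also have "\<dots> \<le> eps B t H b * \<bar>theta_comp t u x - theta_comp t u y\<bar>"
      using eps_lip[OF sv hu] lv by simp
    also have "\<dots> \<le> eps B t H b * (eps B t H a * \<bar>x - y\<bar>)"
      using eps_lip[OF su xy(1,2)] lu eps_nonneg by (intro mult_left_mono) auto
    finally show "z \<le> eps B t H a * eps B t H b"
      unfolding z using xy by (simp add: pos_divide_le_eq ac_simps)
  qed
  then show ?thesis using eps_S[OF False] by simp
qed

lemma eps_contr:
  assumes "\<mu> \<ge> 1" "\<forall>w\<in>words B \<mu>. \<forall>x\<in>H. \<forall>y\<in>H.
          \<bar>theta_comp t w x - theta_comp t w y\<bar> \<le> \<kappa> * \<bar>x - y\<bar>"
  shows "eps B t H \<mu> \<le> \<kappa>"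
proof -
  have "Sup (S \<mu>) \<le> \<kappa>"
  proof (rule cSup_least[OF S_ne])
    fix z assume "z \<in> S \<mu>"
    then obtain w x y where z: "z = \<bar>theta_comp t w x - theta_comp t w y\<bar> / \<bar>x - y\<bar>"
      and w: "w \<in> words B \<mu>" and xy: "x \<in> H" "y \<in> H" "x \<noteq> y"
      unfolding S_def by blast
    then show "z \<le> \<kappa>" using assms(2) by (simp add: pos_divide_le_eq)
  qed
  then show ?thesis using eps_S assms(1) by simp
qed

lemma T1_eps:
  assumes d0: "\<forall>\<beta>\<in>B. \<forall>x\<in>H. (t \<beta> has_real_derivative t1 \<beta> x) (at x)"
    and d1: "\<forall>\<beta>\<in>B. \<forall>x\<in>H. (t1 \<beta> has_real_derivative t2 \<beta> x) (at x)"
    and p: "set p \<subseteq> B" and y: "y \<in> H"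
  shows "\<bar>T1 t t1 p y\<bar> \<le> eps B t H (length p)"
proof -
  have "(theta_comp t p has_real_derivative T1 t t1 p y) (at y)"
    using theta_comp_deriv[OF maps d0 d1 p y] by blast
  moreover have "\<forall>z\<in>H. \<bar>theta_comp t p z - theta_comp t p y\<bar> \<le> eps B t H (length p) * \<bar>z - y\<bar>"
    using eps_lip[OF p _ y] by blast
  ultimately show ?thesis by (rule deriv_lip_bound[OF _ oH y])
qed

end

lemma summable_submult:
  fixes e :: "nat \<Rightarrow> real"
  assumes e0: "\<And>k. e k \<ge> 0" and sm: "\<And>a b. e (a + b) \<le> e a * e b"
    and mu: "\<mu> \<ge> 1" and ek: "e \<mu> \<le> \<kappa>" and k1: "\<kappa> < 1"
  shows "summable e"
proof -
  define k' where "k' = max \<kappa> (1/2)"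
  have k': "0 < k'" "k' < 1" "e \<mu> \<le> k'" using k1 ek by (auto simp: k'_def)
  define \<rho> where "\<rho> = root \<mu> k'"
  have mu0: "0 < \<mu>" using mu by simp
  have \<rho>: "0 < \<rho>" "\<rho> < 1" "\<rho> ^ \<mu> = k'"
    using k' mu0 by (auto simp: \<rho>_def real_root_gt_zero)
  define E where "E = Max (e ` {..<\<mu>})"
  have Er: "e r \<le> E" if "r < \<mu>" for r unfolding E_def using that by (intro Max_ge) auto
  have qr: "e (q * \<mu> + r) \<le> k' ^ q * E" if "r < \<mu>" for q r
  proof (induction q)
    case 0 then show ?case using Er[OF that] by simp
  next
    case (Suc q)
    have "e (Suc q * \<mu> + r) = e (\<mu> + (q * \<mu> + r))" by (simp add: algebra_simps)
    also have "\<dots> \<le> e \<mu> * e (q * \<mu> + r)" by (rule sm)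
    also have "\<dots> \<le> k' * (k' ^ q * E)"
      using k' Suc e0 by (intro mult_mono) auto
    finally show ?case by simp
  qed
  have bnd: "norm (e k) \<le> (E / k') * \<rho> ^ k" for k
  proof -
    define q where "q = k div \<mu>"
    define r where "r = k mod \<mu>"
    have kq: "k = q * \<mu> + r" by (simp add: q_def r_def)
    have r: "r < \<mu>" using mu0 by (simp add: r_def)
    have E0: "0 \<le> E" using Er[OF r] e0[of r] by linarith
    have "k \<le> (q + 1) * \<mu>" using kq r by simp
    then have "\<rho> ^ ((q + 1) * \<mu>) \<le> \<rho> ^ k" using \<rho> by (intro power_decreasing) auto
    moreover have "\<rho> ^ ((q + 1) * \<mu>) = k' ^ (q + 1)"
      by (metis \<rho>(3) mult.commute power_mult)
    ultimately have "k' * k' ^ q \<le> \<rho> ^ k" by simp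
    then have kq': "k' ^ q \<le> \<rho> ^ k / k'" using k' by (simp add: field_simps)
    have "e k \<le> k' ^ q * E" using qr[OF r] kq by simp
    also have "\<dots> \<le> (\<rho> ^ k / k') * E" using kq' E0 by (intro mult_right_mono) auto
    finally show ?thesis using e0[of k] by (simp add: ac_simps)
  qed
  have g: "summable (\<lambda>k. (E / k') * \<rho> ^ k)"
    by (rule summable_mult[OF summable_geometric]) (use \<rho> in auto)
  show ?thesis
    by (rule summable_comparison_test'[OF g bnd])
qed



lemma bdd_from_cont:
  fixes f :: "'b \<Rightarrow> real \<Rightarrow> real"
  assumes "finite B" "compact K" "H \<subseteq> K" "\<forall>\<beta>\<in>B. continuous_on K (f \<beta>)"
  shows "\<exists>M. \<forall>\<beta>\<in>B. \<forall>x\<in>H. f \<beta> x \<le> M"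
proof -
  have "\<forall>\<beta>\<in>B. \<exists>M. \<forall>x\<in>H. f \<beta> x \<le> M"
  proof
    fix \<beta> assume "\<beta> \<in> B"
    then obtain M where "\<forall>x\<in>K. \<bar>f \<beta> x\<bar> \<le> M" using bounded_on_compact assms by blast
    then show "\<exists>M. \<forall>x\<in>H. f \<beta> x \<le> M" using assms(3) by (meson abs_le_D1 subsetD)
  qed
  then show ?thesis by (rule finite_ub[OF assms(1)]) (meson order_trans)
qed

lemma summable_sq:
  fixes e :: "nat \<Rightarrow> real"
  assumes "summable e" "\<And>k. e k \<ge> 0"
  shows "summable (\<lambda>k. (e k)\<^sup>2)"
proof -
  have "eventually (\<lambda>k. e k < 1) sequentially"
    using summable_LIMSEQ_zero[OF assms(1)] by (rule order_tendstoD) simp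
  then obtain N where N: "\<forall>k\<ge>N. e k < 1" unfolding eventually_sequentially by blast
  show ?thesis
  proof (rule summable_comparison_test'[OF assms(1)])
    fix k assume "k \<ge> N"
    then have "e k < 1" using N by blast
    then show "norm ((e k)\<^sup>2) \<le> e k" using assms(2)[of k]
      by (simp add: power2_eq_square mult_left_le)
  qed
qed



theorem lemma6p3:
  fixes n m :: nat and c d :: "nat \<Rightarrow> real" and B :: "'b set"
    and b \<theta> :: "'b \<Rightarrow> real \<Rightarrow> real" and s :: real
  assumes cd: "\<forall>j\<in>{1..n}. c j < d j"
    and disj: "\<forall>i\<in>{1..n}. \<forall>j\<in>{1..n}. i \<noteq> j \<longrightarrow> {c i..d i} \<inter> {c j..d j} = {}"
    and finB: "finite B"
    and m2: "m \<ge> 2"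
    and b_Cm: "\<forall>\<beta>\<in>B. Cm_bar m (union_intervals n c d) (b \<beta>)"
    and th_Cm: "\<forall>\<beta>\<in>B. Cm_bar m (union_intervals n c d) (\<theta> \<beta>)"
    and b_pos: "\<forall>\<beta>\<in>B. \<forall>x\<in>closure (union_intervals n c d). b \<beta> x > 0"
    and th_maps: "\<forall>\<beta>\<in>B. \<theta> \<beta> ` union_intervals n c d \<subseteq> union_intervals n c d"
    and contr: "\<exists>\<mu>::nat. \<exists>\<kappa>::real. \<mu> \<ge> 1 \<and> \<kappa> < 1 \<and>
       (\<forall>w\<in>words B \<mu>. \<forall>x\<in>closure (union_intervals n c d). \<forall>y\<in>closure (union_intervals n c d).
          \<bar>theta_comp \<theta> w x - theta_comp \<theta> w y\<bar> \<le> \<kappa> * \<bar>x - y\<bar>)"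
    and s_pos: "s > 0"
  shows "\<forall>\<nu>\<ge>1. \<forall>w\<in>words B \<nu>. \<forall>x\<in>closure (union_intervals n c d).
     \<forall>F1 F2 :: real \<Rightarrow> real.
       (\<forall>y\<in>closure (union_intervals n c d).
          ((\<lambda>z. b_comp b \<theta> w z powr s) has_real_derivative F1 y) (at y within closure (union_intervals n c d))) \<and>
       (\<forall>y\<in>closure (union_intervals n c d).
          (F1 has_real_derivative F2 y) (at y within closure (union_intervals n c d)))
       \<longrightarrow>
       F2 x / b_comp b \<theta> w x powr s
         \<le> s\<^sup>2 * (const_C1 B b (union_intervals n c d))\<^sup>2 * (\<Sum>k. eps B \<theta> (union_intervals n c d) k)\<^sup>2
           + s * (\<Sum>k. (eps B \<theta> (union_intervals n c d) k)\<^sup>2)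
               * (const_C2 B b (union_intervals n c d)
                  + const_C1 B b (union_intervals n c d) * const_M0 B \<theta> (union_intervals n c d)
                    * (\<Sum>k. eps B \<theta> (union_intervals n c d) k))
       \<and>
       F2 x / b_comp b \<theta> w x powr s
         \<ge> - s * (\<Sum>k. (eps B \<theta> (union_intervals n c d) k)\<^sup>2)
               * ((const_C1 B b (union_intervals n c d))\<^sup>2 + const_C2 B b (union_intervals n c d)
                  + const_C1 B b (union_intervals n c d) * const_M0 B \<theta> (union_intervals n c d)
                    * (\<Sum>k. eps B \<theta> (union_intervals n c d) k))"
proof -
  define H where "H = union_intervals n c d"
  define K where "K = closure H"
  have oH: "open H" unfolding H_def union_intervals_def by auto
  have HK: "H \<subseteq> K" unfolding K_def by (rule closure_subset)
  have cK: "compact K" unfolding K_def H_def union_intervals_def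
    by (simp add: bounded_UN)
  have Ksub: "K \<subseteq> (\<Union>j\<in>{1..n}. {c j..d j})"
    unfolding K_def H_def union_intervals_def
    by (rule closure_minimal) (auto intro!: closed_UN)
  obtain gb where gb: "\<forall>\<beta>\<in>B. gb \<beta> 0 = b \<beta> \<and>
        (\<forall>k<m. \<forall>x\<in>H. (gb \<beta> k has_real_derivative gb \<beta> (Suc k) x) (at x)) \<and>
        (\<forall>k\<le>m. continuous_on K (gb \<beta> k))"
    using bchoice[OF b_Cm[unfolded Cm_bar_def]] unfolding H_def K_def by blast
  obtain gt where gt: "\<forall>\<beta>\<in>B. gt \<beta> 0 = \<theta> \<beta> \<and>
        (\<forall>k<m. \<forall>x\<in>H. (gt \<beta> k has_real_derivative gt \<beta> (Suc k) x) (at x)) \<and>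
        (\<forall>k\<le>m. continuous_on K (gt \<beta> k))"
    using bchoice[OF th_Cm[unfolded Cm_bar_def]] unfolding H_def K_def by blast
  define b1 where "b1 \<beta> = gb \<beta> (Suc 0)" for \<beta>
  define b2 where "b2 \<beta> = gb \<beta> (Suc (Suc 0))" for \<beta>
  define t1 where "t1 \<beta> = gt \<beta> (Suc 0)" for \<beta>
  define t2 where "t2 \<beta> = gt \<beta> (Suc (Suc 0))" for \<beta>
  have m0: "0 < m" "Suc 0 < m" using m2 by auto
  have e0: "\<forall>\<beta>\<in>B. \<forall>x\<in>H. (b \<beta> has_real_derivative b1 \<beta> x) (at x)"
  proof (intro ballI)
    fix \<beta> x assume "\<beta> \<in> B" "x \<in> H"
    then have a: "gb \<beta> 0 = b \<beta>" and "\<forall>k<m. \<forall>x\<in>H. (gb \<beta> k has_real_derivative gb \<beta> (Suc k) x) (at x)"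
      using gb by blast+
    then have "(gb \<beta> 0 has_real_derivative gb \<beta> (Suc 0) x) (at x)" using m0 \<open>x \<in> H\<close> by blast
    then have "(b \<beta> has_real_derivative gb \<beta> (Suc 0) x) (at x)" using a by simp
    then show "(b \<beta> has_real_derivative b1 \<beta> x) (at x)" unfolding b1_def by simp
  qed
  have e1: "\<forall>\<beta>\<in>B. \<forall>x\<in>H. (b1 \<beta> has_real_derivative b2 \<beta> x) (at x)"
  proof (intro ballI)
    fix \<beta> x assume "\<beta> \<in> B" "x \<in> H"
    then have "\<forall>k<m. \<forall>x\<in>H. (gb \<beta> k has_real_derivative gb \<beta> (Suc k) x) (at x)"
      using gb by blast
    then have "(gb \<beta> (Suc 0) has_real_derivative gb \<beta> (Suc (Suc 0)) x) (at x)" using m0 \<open>x \<in> H\<close> by blast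
    then show "(b1 \<beta> has_real_derivative b2 \<beta> x) (at x)" unfolding b1_def b2_def by simp
  qed
  have d0: "\<forall>\<beta>\<in>B. \<forall>x\<in>H. (\<theta> \<beta> has_real_derivative t1 \<beta> x) (at x)"
  proof (intro ballI)
    fix \<beta> x assume "\<beta> \<in> B" "x \<in> H"
    then have a: "gt \<beta> 0 = \<theta> \<beta>" and "\<forall>k<m. \<forall>x\<in>H. (gt \<beta> k has_real_derivative gt \<beta> (Suc k) x) (at x)"
      using gt by blast+
    then have "(gt \<beta> 0 has_real_derivative gt \<beta> (Suc 0) x) (at x)" using m0 \<open>x \<in> H\<close> by blast
    then have "(\<theta> \<beta> has_real_derivative gt \<beta> (Suc 0) x) (at x)" using a by simp
    then show "(\<theta> \<beta> has_real_derivative t1 \<beta> x) (at x)" unfolding t1_def by simp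
  qed
  have d1: "\<forall>\<beta>\<in>B. \<forall>x\<in>H. (t1 \<beta> has_real_derivative t2 \<beta> x) (at x)"
  proof (intro ballI)
    fix \<beta> x assume "\<beta> \<in> B" "x \<in> H"
    then have "\<forall>k<m. \<forall>x\<in>H. (gt \<beta> k has_real_derivative gt \<beta> (Suc k) x) (at x)"
      using gt by blast
    then have "(gt \<beta> (Suc 0) has_real_derivative gt \<beta> (Suc (Suc 0)) x) (at x)" using m0 \<open>x \<in> H\<close> by blast
    then show "(t1 \<beta> has_real_derivative t2 \<beta> x) (at x)" unfolding t1_def t2_def by simp
  qed
  have bposK: "\<forall>\<beta>\<in>B. \<forall>x\<in>K. b \<beta> x > 0" using b_pos unfolding K_def H_def by blast
  have m2': "Suc (Suc 0) \<le> m" using m2 by simp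
  have cb: "\<forall>\<beta>\<in>B. continuous_on K (b \<beta>) \<and> continuous_on K (b1 \<beta>) \<and> continuous_on K (b2 \<beta>)"
  proof
    fix \<beta> assume "\<beta> \<in> B"
    then have "gb \<beta> 0 = b \<beta>" "\<forall>k\<le>m. continuous_on K (gb \<beta> k)" using gb by auto
    then show "continuous_on K (b \<beta>) \<and> continuous_on K (b1 \<beta>) \<and> continuous_on K (b2 \<beta>)"
      unfolding b1_def b2_def using m2' by auto
  qed
  have ct: "\<forall>\<beta>\<in>B. continuous_on K (\<theta> \<beta>) \<and> continuous_on K (t1 \<beta>) \<and> continuous_on K (t2 \<beta>)"
  proof
    fix \<beta> assume "\<beta> \<in> B"
    then have "gt \<beta> 0 = \<theta> \<beta>" "\<forall>k\<le>m. continuous_on K (gt \<beta> k)" using gt by auto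
    then show "continuous_on K (\<theta> \<beta>) \<and> continuous_on K (t1 \<beta>) \<and> continuous_on K (t2 \<beta>)"
      unfolding t1_def t2_def using m2' by auto
  qed
  have cq1: "\<forall>\<beta>\<in>B. continuous_on K (\<lambda>x. \<bar>b1 \<beta> x\<bar> / b \<beta> x)"
  proof
    fix \<beta> assume be: "\<beta> \<in> B"
    show "continuous_on K (\<lambda>x. \<bar>b1 \<beta> x\<bar> / b \<beta> x)"
    proof -
      have nz: "\<forall>x\<in>K. b \<beta> x \<noteq> 0" using bposK be by fastforce
      show ?thesis by (intro continuous_intros) (use cb be nz in auto)
    qed
  qed
  have cq2: "\<forall>\<beta>\<in>B. continuous_on K (\<lambda>x. \<bar>b2 \<beta> x\<bar> / b \<beta> x)"
  proof
    fix \<beta> assume be: "\<beta> \<in> B"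
    show "continuous_on K (\<lambda>x. \<bar>b2 \<beta> x\<bar> / b \<beta> x)"
    proof -
      have nz: "\<forall>x\<in>K. b \<beta> x \<noteq> 0" using bposK be by fastforce
      show ?thesis by (intro continuous_intros) (use cb be nz in auto)
    qed
  qed
  have cq3: "\<forall>\<beta>\<in>B. continuous_on K (\<lambda>x. \<bar>t2 \<beta> x\<bar>)"
    using ct by (auto intro: continuous_intros)
  have maps: "\<forall>\<beta>\<in>B. \<forall>x\<in>H. \<theta> \<beta> x \<in> H" using th_maps unfolding H_def by blast
  have bpos: "\<forall>\<beta>\<in>B. \<forall>x\<in>H. b \<beta> x > 0" using bposK HK by blast
  have db: "deriv (b \<beta>) y = b1 \<beta> y" if "\<beta> \<in> B" "y \<in> H" for \<beta> y
    using e0 that DERIV_imp_deriv by blast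
  have ddb: "deriv (deriv (b \<beta>)) y = b2 \<beta> y" if "\<beta> \<in> B" "y \<in> H" for \<beta> y
  proof -
    have "(deriv (b \<beta>) has_real_derivative b2 \<beta> y) (at y)"
      by (rule has_field_derivative_transform_within_open[OF _ oH \<open>y \<in> H\<close>])
         (use e1 that db in auto)
    then show ?thesis by (rule DERIV_imp_deriv)
  qed
  have ddt: "deriv (deriv (\<theta> \<beta>)) y = t2 \<beta> y" if "\<beta> \<in> B" "y \<in> H" for \<beta> y
  proof -
    have dt: "deriv (\<theta> \<beta>) z = t1 \<beta> z" if "z \<in> H" for z
      using d0 \<open>\<beta> \<in> B\<close> that DERIV_imp_deriv by blast
    have "(deriv (\<theta> \<beta>) has_real_derivative t2 \<beta> y) (at y)"
      by (rule has_field_derivative_transform_within_open[OF _ oH \<open>y \<in> H\<close>])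
         (use d1 that dt in auto)
    then show ?thesis by (rule DERIV_imp_deriv)
  qed
  define C1 where "C1 = const_C1 B b H"
  define C2 where "C2 = const_C2 B b H"
  define M0 where "M0 = const_M0 B \<theta> H"
  have rb: "\<forall>\<beta>\<in>B. \<forall>y\<in>H. \<bar>b1 \<beta> y / b \<beta> y\<bar> \<le> C1"
  proof (intro ballI)
    fix \<beta> y assume be: "\<beta> \<in> B" and y: "y \<in> H"
    obtain M where M: "\<forall>\<beta>\<in>B. \<forall>x\<in>H. \<bar>b1 \<beta> x\<bar> / b \<beta> x \<le> M"
      using bdd_from_cont[OF finB cK HK cq1] by blast
    have bdd: "bdd_above {\<bar>deriv (b \<beta>) x\<bar> / b \<beta> x | \<beta> x. \<beta> \<in> B \<and> x \<in> H}"
      unfolding bdd_above_def using M db by fastforce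
    have "\<bar>deriv (b \<beta>) y\<bar> / b \<beta> y \<le> C1" unfolding C1_def const_C1_def
      by (rule cSup_upper[OF _ bdd]) (use be y in blast)
    then show "\<bar>b1 \<beta> y / b \<beta> y\<bar> \<le> C1" using db[OF be y] bpos be y by (simp add: abs_divide abs_of_pos)
  qed
  have qb: "\<forall>\<beta>\<in>B. \<forall>y\<in>H. \<bar>b2 \<beta> y / b \<beta> y\<bar> \<le> C2"
  proof (intro ballI)
    fix \<beta> y assume be: "\<beta> \<in> B" and y: "y \<in> H"
    obtain M where M: "\<forall>\<beta>\<in>B. \<forall>x\<in>H. \<bar>b2 \<beta> x\<bar> / b \<beta> x \<le> M"
      using bdd_from_cont[OF finB cK HK cq2] by blast
    have bdd: "bdd_above {\<bar>deriv (deriv (b \<beta>)) x\<bar> / b \<beta> x | \<beta> x. \<beta> \<in> B \<and> x \<in> H}"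
      unfolding bdd_above_def using M ddb by fastforce
    have "\<bar>deriv (deriv (b \<beta>)) y\<bar> / b \<beta> y \<le> C2" unfolding C2_def const_C2_def
      by (rule cSup_upper[OF _ bdd]) (use be y in blast)
    then show "\<bar>b2 \<beta> y / b \<beta> y\<bar> \<le> C2" using ddb[OF be y] bpos be y by (simp add: abs_divide abs_of_pos)
  qed
  have t2b: "\<forall>\<beta>\<in>B. \<forall>y\<in>H. \<bar>t2 \<beta> y\<bar> \<le> M0"
  proof (intro ballI)
    fix \<beta> y assume be: "\<beta> \<in> B" and y: "y \<in> H"
    obtain M where M: "\<forall>\<beta>\<in>B. \<forall>x\<in>H. \<bar>t2 \<beta> x\<bar> \<le> M"
      using bdd_from_cont[OF finB cK HK cq3] by blast
    have bdd: "bdd_above {\<bar>deriv (deriv (\<theta> \<beta>)) x\<bar> | \<beta> x. \<beta> \<in> B \<and> x \<in> H}"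
      unfolding bdd_above_def using M ddt by fastforce
    have "\<bar>deriv (deriv (\<theta> \<beta>)) y\<bar> \<le> M0" unfolding M0_def const_M0_def
      by (rule cSup_upper[OF _ bdd]) (use be y in blast)
    then show "\<bar>t2 \<beta> y\<bar> \<le> M0" using ddt[OF be y] by simp
  qed
  obtain L where L: "\<forall>\<beta>\<in>B. L \<ge> 0 \<and> (\<forall>x\<in>H. \<forall>y\<in>H. \<bar>\<theta> \<beta> x - \<theta> \<beta> y\<bar> \<le> L * \<bar>x - y\<bar>)"
  proof -
    have "\<forall>\<beta>\<in>B. \<exists>L. L \<ge> 0 \<and> (\<forall>x\<in>H. \<forall>y\<in>H. \<bar>\<theta> \<beta> x - \<theta> \<beta> y\<bar> \<le> L * \<bar>x - y\<bar>)"
    proof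
      fix \<beta> assume be: "\<beta> \<in> B"
      obtain A where A: "\<forall>x\<in>K. \<bar>\<theta> \<beta> x\<bar> \<le> A" using bounded_on_compact[OF _ cK] ct be by blast
      obtain A' where A': "\<forall>x\<in>K. \<bar>t1 \<beta> x\<bar> \<le> A'" using bounded_on_compact[OF _ cK] ct be by blast
      show "\<exists>L. L \<ge> 0 \<and> (\<forall>x\<in>H. \<forall>y\<in>H. \<bar>\<theta> \<beta> x - \<theta> \<beta> y\<bar> \<le> L * \<bar>x - y\<bar>)"
        using lip_union[OF cd disj, of "\<theta> \<beta>" A "t1 \<beta>" A'] A A' HK d0 be
        unfolding H_def by blast
    qed
    then have "\<exists>L. \<forall>\<beta>\<in>B. L \<ge> 0 \<and> (\<forall>x\<in>H. \<forall>y\<in>H. \<bar>\<theta> \<beta> x - \<theta> \<beta> y\<bar> \<le> L * \<bar>x - y\<bar>)"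
    proof (rule finite_ub[OF finB])
      fix \<beta> and M M' :: real
      assume "0 \<le> M \<and> (\<forall>x\<in>H. \<forall>y\<in>H. \<bar>\<theta> \<beta> x - \<theta> \<beta> y\<bar> \<le> M * \<bar>x - y\<bar>)" "M \<le> M'"
      then show "0 \<le> M' \<and> (\<forall>x\<in>H. \<forall>y\<in>H. \<bar>\<theta> \<beta> x - \<theta> \<beta> y\<bar> \<le> M' * \<bar>x - y\<bar>)"
        by (meson abs_ge_zero mult_right_mono order_trans)
    qed
    then show ?thesis using that by blast
  qed
  show ?thesis
    unfolding H_def[symmetric] K_def[symmetric] C1_def[symmetric] C2_def[symmetric] M0_def[symmetric]
  proof (intro allI impI ballI)
    fix \<nu> :: nat and w x and F1 F2 :: "real \<Rightarrow> real"
    assume \<nu>: "\<nu> \<ge> 1" and w: "w \<in> words B \<nu>" and x: "x \<in> K"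
      and hF: "(\<forall>y\<in>K. ((\<lambda>z. b_comp b \<theta> w z powr s) has_real_derivative F1 y) (at y within K)) \<and>
         (\<forall>y\<in>K. (F1 has_real_derivative F2 y) (at y within K))"
    have hF1: "\<forall>y\<in>K. ((\<lambda>z. b_comp b \<theta> w z powr s) has_real_derivative F1 y) (at y within K)"
      and hF2: "\<forall>y\<in>K. (F1 has_real_derivative F2 y) (at y within K)" using hF by auto
    have sw: "set w \<subseteq> B" and lw: "length w = \<nu>" using w unfolding words_def by auto
    have Bne: "B \<noteq> {}" using sw lw \<nu> by (cases w) auto
    have Hne: "H \<noteq> {}" using x unfolding K_def by auto
    have L0: "L \<ge> 0" using L Bne by blast
    interpret E: epsset B \<theta> H L
      by unfold_locales (use oH Hne Bne maps L L0 in auto)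
    define e where "e = eps B \<theta> H"
    have enn: "\<And>k. e k \<ge> 0" unfolding e_def by (rule E.eps_nonneg)
    obtain \<mu> \<kappa> where mk: "\<mu> \<ge> 1" "\<kappa> < 1" "\<forall>w\<in>words B \<mu>. \<forall>x\<in>K. \<forall>y\<in>K.
          \<bar>theta_comp \<theta> w x - theta_comp \<theta> w y\<bar> \<le> \<kappa> * \<bar>x - y\<bar>"
      using contr unfolding K_def H_def by blast
    have emu: "e \<mu> \<le> \<kappa>" unfolding e_def
      by (rule E.eps_contr[OF mk(1)]) (use mk(3) HK in blast)
    have sume: "summable e"
    proof (rule summable_submult[where e=e, OF enn _ mk(1) emu mk(2)])
      fix a b show "e (a + b) \<le> e a * e b" unfolding e_def by (rule E.eps_submult)
    qed
    have sume2: "summable (\<lambda>k. (e k)\<^sup>2)" by (rule summable_sq[OF sume enn])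
    define S where "S = (\<Sum>k. e k)"
    define S2 where "S2 = (\<Sum>k. (e k)\<^sup>2)"
    define S1p where "S1p = (\<Sum>k<length w. e k)"
    define S2p where "S2p = (\<Sum>k<length w. (e k)\<^sup>2)"
    have S1p: "0 \<le> S1p" "S1p \<le> S" unfolding S1p_def S_def
      using enn sum_le_suminf[OF sume] by (auto intro: sum_nonneg)
    have S2p: "0 \<le> S2p" "S2p \<le> S2" unfolding S2p_def S2_def
      using enn sum_le_suminf[OF sume2] by (auto intro: sum_nonneg)
    obtain \<beta>0 y0 where be0: "\<beta>0 \<in> B" and y0: "y0 \<in> H" using Bne Hne by blast
    have C1: "0 \<le> C1" using rb be0 y0 by (meson abs_ge_zero order_trans)
    have C2: "0 \<le> C2" using qb be0 y0 by (meson abs_ge_zero order_trans)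
    have M0: "0 \<le> M0" using t2b be0 y0 by (meson abs_ge_zero order_trans)
    have T1b: "\<And>p y. set p \<subseteq> B \<Longrightarrow> y \<in> H \<Longrightarrow> \<bar>T1 \<theta> t1 p y\<bar> \<le> e (length p)"
      unfolding e_def by (rule E.T1_eps[OF d0 d1])
    define U where "U = s\<^sup>2 * C1\<^sup>2 * S\<^sup>2 + s * S2 * (C2 + C1 * M0 * S)"
    define Lo where "Lo = - s * S2 * (C1\<^sup>2 + C2 + C1 * M0 * S)"
    define Q where "Q z = b_comp b \<theta> w z powr s" for z
    have S0: "0 \<le> S" using S1p by linarith
    have S20: "0 \<le> S2" using S2p by linarith
    have U0: "U \<ge> 0" unfolding U_def using s_pos C1 C2 M0 S0 S20 by (intro add_nonneg_nonneg) auto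
    have Lo0: "Lo \<le> 0" unfolding Lo_def using s_pos C1 C2 M0 S0 S20 by (simp add: mult_nonneg_nonneg)
    have inner: "Lo * Q \<xi> \<le> F2 \<xi> \<and> F2 \<xi> \<le> U * Q \<xi>" if xi: "\<xi> \<in> H" for \<xi>
    proof -
      define r where "r k = b1 (w!k) (theta_comp \<theta> (take k w) \<xi>) / b (w!k) (theta_comp \<theta> (take k w) \<xi>)" for k
      define q where "q k = b2 (w!k) (theta_comp \<theta> (take k w) \<xi>) / b (w!k) (theta_comp \<theta> (take k w) \<xi>)" for k
      define P1 where "P1 = (\<Sum>k<length w. r k * T1 \<theta> t1 (take k w) \<xi>)"
      define P2 where "P2 = (\<Sum>k<length w. (q k - (r k)\<^sup>2) * (T1 \<theta> t1 (take k w) \<xi>)\<^sup>2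
                              + r k * T2 \<theta> t1 t2 (take k w) \<xi>)"
      have form: "b_comp b \<theta> w \<xi> > 0 \<and> F2 \<xi> = (s * P2 + s\<^sup>2 * P1\<^sup>2) * Q \<xi>"
        using interior_formula[OF maps d0 d1 e0 e1 bpos oH HK sw xi hF1 hF2]
        unfolding P1_def P2_def r_def q_def Q_def .
      have Qpos: "Q \<xi> > 0" using form unfolding Q_def by simp
      have pb1: "\<bar>P1\<bar> \<le> C1 * S1p" and pb2: "P2 \<le> C2 * S2p + C1 * M0 * (S1p * S2p)"
        and pb3: "P2 \<ge> - (C1\<^sup>2 + C2) * S2p - C1 * M0 * (S1p * S2p)"
        using phi_bounds[OF maps T1b t2b rb qb enn sw xi]
        unfolding P1_def P2_def r_def q_def S1p_def S2p_def by auto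
      have P1sq: "P1\<^sup>2 \<le> C1\<^sup>2 * S\<^sup>2"
      proof -
        have "\<bar>P1\<bar> \<le> C1 * S" using pb1 S1p C1 by (meson mult_left_mono order_trans)
        then have "\<bar>P1\<bar>\<^sup>2 \<le> (C1 * S)\<^sup>2" by (rule power_mono) simp
        then show ?thesis by (simp add: power_mult_distrib)
      qed
      have prod: "S1p * S2p \<le> S * S2" using S1p S2p by (intro mult_mono) auto
      have up: "s * P2 + s\<^sup>2 * P1\<^sup>2 \<le> U"
      proof -
        have "P2 \<le> C2 * S2 + C1 * M0 * (S * S2)"
        proof -
          have "C2 * S2p \<le> C2 * S2" using C2 S2p by (simp add: mult_left_mono)
          moreover have "C1 * M0 * (S1p * S2p) \<le> C1 * M0 * (S * S2)"
            using C1 M0 prod by (simp add: mult_left_mono)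
          ultimately show ?thesis using pb2 by linarith
        qed
        then have "s * P2 \<le> s * (C2 * S2 + C1 * M0 * (S * S2))" using s_pos by simp
        moreover have "s\<^sup>2 * P1\<^sup>2 \<le> s\<^sup>2 * (C1\<^sup>2 * S\<^sup>2)" using P1sq by (simp add: mult_left_mono)
        ultimately show ?thesis unfolding U_def by (simp add: algebra_simps)
      qed
      have lo: "Lo \<le> s * P2 + s\<^sup>2 * P1\<^sup>2"
      proof -
        have "- (C1\<^sup>2 + C2) * S2 - C1 * M0 * (S * S2) \<le> P2"
        proof -
          have "(C1\<^sup>2 + C2) * S2p \<le> (C1\<^sup>2 + C2) * S2" using C2 S2p by (simp add: mult_left_mono)
          moreover have "C1 * M0 * (S1p * S2p) \<le> C1 * M0 * (S * S2)"
            using C1 M0 prod by (simp add: mult_left_mono)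
          ultimately show ?thesis using pb3 by linarith
        qed
        then have "s * (- (C1\<^sup>2 + C2) * S2 - C1 * M0 * (S * S2)) \<le> s * P2" using s_pos by simp
        moreover have "0 \<le> s\<^sup>2 * P1\<^sup>2" by simp
        moreover have "Lo = s * (- (C1\<^sup>2 + C2) * S2 - C1 * M0 * (S * S2))"
          unfolding Lo_def by (simp add: algebra_simps)
        ultimately show ?thesis by linarith
      qed
      show ?thesis using form up lo Qpos by (simp add: mult_right_mono)
    qed
    obtain j where j: "j \<in> {1..n}" "x \<in> {c j..d j}" using x Ksub by blast
    have cdj: "c j < d j" using cd j by auto
    have jH: "{c j<..<d j} \<subseteq> H" using j unfolding H_def union_intervals_def by blast
    have jK: "{c j..d j} \<subseteq> K"
    proof -
      have "closure {c j<..<d j} \<subseteq> K" unfolding K_def by (rule closure_mono[OF jH])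
      then show ?thesis using cdj by simp
    qed
    have Qc: "continuous (at x within K) Q"
      unfolding Q_def using hF1 x DERIV_continuous by blast
    have upx: "F2 x \<le> U * Q x"
      by (rule boundary_bound[OF cdj j(2) jH jK HK oH hF2 Qc _ U0]) (use inner in auto)
    have lox: "- F2 x \<le> (- Lo) * Q x"
    proof (rule boundary_bound[OF cdj j(2) jH jK HK oH _ Qc])
      show "\<forall>y\<in>K. ((\<lambda>z. - F1 z) has_real_derivative - F2 y) (at y within K)"
        using hF2 DERIV_minus by blast
      show "\<forall>\<xi>\<in>H. - F2 \<xi> \<le> - Lo * Q \<xi>" using inner by auto
      show "0 \<le> - Lo" using Lo0 by simp
    qed
    have Qx0: "Q x \<ge> 0" unfolding Q_def by simp
    have fin_up: "F2 x / Q x \<le> U"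
    proof (cases "Q x = 0")
      case True then show ?thesis using U0 by simp
    next
      case False then have "Q x > 0" using Qx0 by simp
      then show ?thesis using upx by (simp add: pos_divide_le_eq)
    qed
    have fin_lo: "Lo \<le> F2 x / Q x"
    proof (cases "Q x = 0")
      case True then show ?thesis using Lo0 by simp
    next
      case False then have "Q x > 0" using Qx0 by simp
      then show ?thesis using lox by (simp add: pos_le_divide_eq)
    qed
    show "F2 x / b_comp b \<theta> w x powr s
         \<le> s\<^sup>2 * C1\<^sup>2 * (\<Sum>k. eps B \<theta> H k)\<^sup>2
           + s * (\<Sum>k. (eps B \<theta> H k)\<^sup>2) * (C2 + C1 * M0 * (\<Sum>k. eps B \<theta> H k))
       \<and> F2 x / b_comp b \<theta> w x powr s
         \<ge> - s * (\<Sum>k. (eps B \<theta> H k)\<^sup>2) * (C1\<^sup>2 + C2 + C1 * M0 * (\<Sum>k. eps B \<theta> H k))"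
      using fin_up fin_lo unfolding Q_def U_def Lo_def S_def S2_def e_def by simp
  qed
qed


end
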